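(* For any TI Pauli topological subsystem code on an $L\times L$ torus, let $\mathsf{E}$ be the set of Pauli operators whose support has linear size less than $L/2-\ell_S$. Then $\mathsf{E}$ is a correctable set of errors; more precisely, for any $E_1,E_2\in\mathsf{E}$ there is a gauge operator $G\in\mathcal{G}$ such that $$\Pi_{\tilde C}\,E_1E_2^\dagger\,\Pi_{\tilde C}\ \propto\ G\,\Pi_{\tilde C},$$ where $\Pi_{\tilde C}$ is the projector onto $\mathcal{H}_{\tilde C}=\{|\psi\rangle: S|\psi\rangle=|\psi\rangle\ \forall S\in\tilde{\mathcal{S}}\}$.
   Context: Qudits of arbitrary (possibly composite) dimension $N$ with generalized Pauli operators $X=\sum_\alpha|\alpha+1\rangle\langle\alpha|$, $Z=\sum_\alpha e^{2\pi i\alpha/N}|\alpha\rangle\langle\alpha|$; $\mathcal{P}$ is the group of finite products of single-site Paulis times phases. A subsystem code: gauge group $\mathcal{G}\le\mathcal{P}$ (containing all phases) and stabilizer group $\mathcal{S}$ (abelian, no nontrivial multiple of identity) with $\mathcal{Z}(\mathcal{G})\propto\mathcal{S}$ ("$\propto$" = equal up to phases). A 2D TI topological subsystem code: (i) $\mathcal{G}$ is translation invariant; (ii) $\mathcal{G}$ is generated by operators of linear size $<\ell_G$; (iii) on the infinite plane $\mathcal{S}$ is generated by operators of linear size $<\ell_S$ and $\mathcal{Z}_{\mathcal{P}}(\mathcal{S})\propto\mathcal{G}$ ($\mathcal{Z}_{\mathcal{P}}$ = centralizer in $\mathcal{P}$). On the torus, $\tilde{\mathcal{S}}$ is the subgroup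 of $\mathcal{S}$ generated by local stabilizers (linear size $<\ell_S$). A set of errors $\mathsf{E}$ is correctable if for all $E_1,E_2\in\mathsf{E}$, $\Pi E_1E_2^\dagger\Pi\propto G\Pi$ for some gauge operator $G$, with $\Pi$ the code-space projector. *)

theory Defs
  imports "HOL-Analysis.Analysis"
begin

type_synonym site = "int \<times> int"
type_synonym pvec = "site \<Rightarrow> int"          \<comment> \<open>exponent vector, entries in {0..<N}\<close>
type_synonym conf = "site \<Rightarrow> int"          \<comment> \<open>computational basis label\<close>
type_synonym op = "conf \<Rightarrow> conf \<Rightarrow> complex"  \<comment> \<open>matrix kernel: A beta alpha = <beta|A|alpha>\<close>

text \<open>Support of a Pauli (mod phase) X^a Z^b.\<close>
definition psupp :: "pvec \<times> pvec \<Rightarrow> site set" where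
  "psupp v = {p. fst v p \<noteq> 0 \<or> snd v p \<noteq> 0}"

text \<open>Linear size on the plane: the set fits in a d x d square of sites (d sites per side).\<close>
definition plane_linsize_lt :: "site set \<Rightarrow> real \<Rightarrow> bool" where
  "plane_linsize_lt A r \<longleftrightarrow>
     (\<exists>x0 y0 (d::nat). real d < r \<and> A \<subseteq> {x0..<x0 + int d} \<times> {y0..<y0 + int d})"

definition pvecs :: "nat \<Rightarrow> (pvec \<times> pvec) set" where
  "pvecs N = {v. finite (psupp v) \<and> (\<forall>p. 0 \<le> fst v p \<and> fst v p < int N \<and> 0 \<le> snd v p \<and> snd v p < int N)}"

definition padd :: "nat \<Rightarrow> pvec \<times> pvec \<Rightarrow> pvec \<times> pvec \<Rightarrow> pvec \<times> pvec" where
  "padd N v w = ((\<lambda>p. (fst v p + fst w p) mod int N), (\<lambda>p. (snd v p + snd w p) mod int N))"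

definition pneg :: "nat \<Rightarrow> pvec \<times> pvec \<Rightarrow> pvec \<times> pvec" where
  "pneg N v = ((\<lambda>p. (- fst v p) mod int N), (\<lambda>p. (- snd v p) mod int N))"

definition pzero :: "pvec \<times> pvec" where
  "pzero = ((\<lambda>_. 0), (\<lambda>_. 0))"

text \<open>X^a Z^b and X^a' Z^b' commute iff b.a' = b'.a (mod N).\<close>
definition pcomm :: "nat \<Rightarrow> pvec \<times> pvec \<Rightarrow> pvec \<times> pvec \<Rightarrow> bool" where
  "pcomm N v w \<longleftrightarrow>
     (\<Sum>p\<in>psupp v \<union> psupp w. snd v p * fst w p - snd w p * fst v p) mod int N = 0"

definition plane_subgroup :: "nat \<Rightarrow> (pvec \<times> pvec) set \<Rightarrow> bool" where
  "plane_subgroup N H \<longleftrightarrow> H \<subseteq> pvecs N \<and> pzero \<in> H \<and>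
     (\<forall>v\<in>H. \<forall>w\<in>H. padd N v w \<in> H) \<and> (\<forall>v\<in>H. pneg N v \<in> H)"

definition plane_span :: "nat \<Rightarrow> (pvec \<times> pvec) set \<Rightarrow> (pvec \<times> pvec) set" where
  "plane_span N X = \<Inter>{H. plane_subgroup N H \<and> X \<subseteq> H}"

definition pshift :: "site \<Rightarrow> pvec \<times> pvec \<Rightarrow> pvec \<times> pvec" where
  "pshift u v = ((\<lambda>p. fst v (fst p - fst u, snd p - snd u)), (\<lambda>p. snd v (fst p - fst u, snd p - snd u)))"

text \<open>Center of the gauge group (mod phases); this is S up to phases.\<close>
definition plane_center :: "nat \<Rightarrow> (pvec \<times> pvec) set \<Rightarrow> (pvec \<times> pvec) set" where
  "plane_center N G = {g\<in>G. \<forall>h\<in>G. pcomm N g h}"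

text \<open>A 2D translation-invariant topological subsystem code, given by its gauge group
  on the infinite plane (which contains all phases, hence is represented modulo phases),
  with locality parameters lG, lS.\<close>
definition ti_topo_subsys_code :: "nat \<Rightarrow> nat \<Rightarrow> nat \<Rightarrow> (pvec \<times> pvec) set \<Rightarrow> bool" where
  "ti_topo_subsys_code N lG lS G \<longleftrightarrow>
     plane_subgroup N G \<and>
     (\<forall>u. \<forall>g\<in>G. pshift u g \<in> G) \<and>
     G = plane_span N {g\<in>G. plane_linsize_lt (psupp g) (real lG)} \<and>
     plane_center N G = plane_span N {s\<in>plane_center N G. plane_linsize_lt (psupp s) (real lS)} \<and>
     {p\<in>pvecs N. \<forall>s\<in>plane_center N G. pcomm N p s} = G"

definition torus_sites :: "nat \<Rightarrow> site set" where
  "torus_sites L = {0..<int L} \<times> {0..<int L}"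

definition torus_linsize_lt :: "nat \<Rightarrow> site set \<Rightarrow> real \<Rightarrow> bool" where
  "torus_linsize_lt L A r \<longleftrightarrow>
     (\<exists>x0 y0 (d::nat). real d < r \<and>
        A \<subseteq> {((x0 + i) mod int L, (y0 + j) mod int L) | i j. 0 \<le> i \<and> i < int d \<and> 0 \<le> j \<and> j < int d})"

definition tvecs :: "nat \<Rightarrow> nat \<Rightarrow> pvec set" where
  "tvecs L N = {a. (\<forall>s\<in>torus_sites L. 0 \<le> a s \<and> a s < int N) \<and> (\<forall>s. s \<notin> torus_sites L \<longrightarrow> a s = 0)}"

definition confs :: "nat \<Rightarrow> nat \<Rightarrow> conf set" where
  "confs L N = tvecs L N"

text \<open>Generalized Pauli X^a Z^b on the torus: X^a Z^b |alpha> = omega^(b.alpha) |alpha + a>,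
  omega = exp(2 pi i / N). Kernels vanish outside the basis labels.\<close>
definition W :: "nat \<Rightarrow> nat \<Rightarrow> pvec \<Rightarrow> pvec \<Rightarrow> op" where
  "W L N a b = (\<lambda>\<beta> \<alpha>. if \<beta> \<in> confs L N \<and> \<alpha> \<in> confs L N \<and>
                          (\<forall>s\<in>torus_sites L. \<beta> s = (\<alpha> s + a s) mod int N)
                       then cis (2 * pi * of_int (\<Sum>s\<in>torus_sites L. b s * \<alpha> s) / real N)
                       else 0)"

definition smult_op :: "complex \<Rightarrow> op \<Rightarrow> op" where
  "smult_op c A = (\<lambda>\<beta> \<alpha>. c * A \<beta> \<alpha>)"

definition mult_op :: "nat \<Rightarrow> nat \<Rightarrow> op \<Rightarrow> op \<Rightarrow> op" where
  "mult_op L N A B = (\<lambda>\<beta> \<alpha>. if \<beta> \<in> confs L N \<and> \<alpha> \<in> confs L N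
                              then (\<Sum>\<gamma>\<in>confs L N. A \<beta> \<gamma> * B \<gamma> \<alpha>) else 0)"

definition adj_op :: "op \<Rightarrow> op" where
  "adj_op A = (\<lambda>\<beta> \<alpha>. cnj (A \<alpha> \<beta>))"

definition id_op :: "nat \<Rightarrow> nat \<Rightarrow> op" where
  "id_op L N = (\<lambda>\<beta> \<alpha>. if \<beta> \<in> confs L N \<and> \<alpha> = \<beta> then 1 else 0)"

definition apply_op :: "nat \<Rightarrow> nat \<Rightarrow> op \<Rightarrow> (conf \<Rightarrow> complex) \<Rightarrow> (conf \<Rightarrow> complex)" where
  "apply_op L N A \<psi> = (\<lambda>\<beta>. \<Sum>\<alpha>\<in>confs L N. A \<beta> \<alpha> * \<psi> \<alpha>)"

definition torus_paulis :: "nat \<Rightarrow> nat \<Rightarrow> op set" where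
  "torus_paulis L N = {smult_op c (W L N a b) | c a b. cmod c = 1 \<and> a \<in> tvecs L N \<and> b \<in> tvecs L N}"

definition tsupp :: "pvec \<Rightarrow> pvec \<Rightarrow> site set" where
  "tsupp a b = {s. a s \<noteq> 0 \<or> b s \<noteq> 0}"

definition op_linsize_lt :: "nat \<Rightarrow> nat \<Rightarrow> op \<Rightarrow> real \<Rightarrow> bool" where
  "op_linsize_lt L N A r \<longleftrightarrow>
     (\<exists>c a b. cmod c = 1 \<and> a \<in> tvecs L N \<and> b \<in> tvecs L N \<and> A = smult_op c (W L N a b) \<and>
              torus_linsize_lt L (tsupp a b) r)"

text \<open>Periodic identification Z^2 -> Z_L^2 of a finitely supported exponent vector.\<close>
definition wrap :: "nat \<Rightarrow> nat \<Rightarrow> pvec \<Rightarrow> pvec" where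
  "wrap L N a = (\<lambda>s. if s \<in> torus_sites L
       then (\<Sum>p\<in>{p. a p \<noteq> 0 \<and> (fst p mod int L, snd p mod int L) = s}. a p) mod int N
       else 0)"

text \<open>Gauge group of the code on the L x L torus: all phases times the periodic images of
  the plane gauge operators (equivalently, generated by the periodic images of the local
  translation-invariant gauge generators).\<close>
definition gauge_ops :: "nat \<Rightarrow> nat \<Rightarrow> (pvec \<times> pvec) set \<Rightarrow> op set" where
  "gauge_ops L N G = {smult_op c (W L N (wrap L N (fst g)) (wrap L N (snd g))) | c g. cmod c = 1 \<and> g \<in> G}"

definition op_center :: "nat \<Rightarrow> nat \<Rightarrow> op set \<Rightarrow> op set" where
  "op_center L N H = {M\<in>H. \<forall>K\<in>H. mult_op L N M K = mult_op L N K M}"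

definition prop_sets :: "op set \<Rightarrow> op set \<Rightarrow> bool" where
  "prop_sets A B \<longleftrightarrow> (\<forall>x\<in>A. \<exists>c. cmod c = 1 \<and> smult_op c x \<in> B) \<and>
                      (\<forall>y\<in>B. \<exists>c. cmod c = 1 \<and> smult_op c y \<in> A)"

definition op_group :: "nat \<Rightarrow> nat \<Rightarrow> op set \<Rightarrow> bool" where
  "op_group L N H \<longleftrightarrow> id_op L N \<in> H \<and> (\<forall>A\<in>H. \<forall>B\<in>H. mult_op L N A B \<in> H) \<and>
                       (\<forall>A\<in>H. adj_op A \<in> H)"

definition op_group_gen :: "nat \<Rightarrow> nat \<Rightarrow> op set \<Rightarrow> op set" where
  "op_group_gen L N X = \<Inter>{H. op_group L N H \<and> X \<subseteq> H}"

definition torus_stabilizer_group :: "nat \<Rightarrow> nat \<Rightarrow> (pvec \<times> pvec) set \<Rightarrow> op set \<Rightarrow> bool" where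
  "torus_stabilizer_group L N G S \<longleftrightarrow>
     S \<subseteq> torus_paulis L N \<and> op_group L N S \<and>
     (\<forall>A\<in>S. \<forall>B\<in>S. mult_op L N A B = mult_op L N B A) \<and>
     (\<forall>c. smult_op c (id_op L N) \<in> S \<longrightarrow> c = 1) \<and>
     prop_sets (op_center L N (gauge_ops L N G)) S"

definition local_stab :: "nat \<Rightarrow> nat \<Rightarrow> nat \<Rightarrow> op set \<Rightarrow> op set" where
  "local_stab L N lS S = op_group_gen L N {A\<in>S. op_linsize_lt L N A (real lS)}"

definition code_space :: "nat \<Rightarrow> nat \<Rightarrow> op set \<Rightarrow> (conf \<Rightarrow> complex) set" where
  "code_space L N T = {\<psi>. (\<forall>\<alpha>. \<alpha> \<notin> confs L N \<longrightarrow> \<psi> \<alpha> = 0) \<and> (\<forall>A\<in>T. apply_op L N A \<psi> = \<psi>)}"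

definition is_proj_onto :: "nat \<Rightarrow> nat \<Rightarrow> op \<Rightarrow> (conf \<Rightarrow> complex) set \<Rightarrow> bool" where
  "is_proj_onto L N P V \<longleftrightarrow>
     (\<forall>\<beta> \<alpha>. \<beta> \<notin> confs L N \<or> \<alpha> \<notin> confs L N \<longrightarrow> P \<beta> \<alpha> = 0) \<and>
     mult_op L N P P = P \<and> adj_op P = P \<and>
     (\<forall>\<psi>. apply_op L N P \<psi> \<in> V) \<and> (\<forall>\<psi>\<in>V. apply_op L N P \<psi> = \<psi>)"

definition small_errors :: "nat \<Rightarrow> nat \<Rightarrow> nat \<Rightarrow> op set" where
  "small_errors L N lS = {E\<in>torus_paulis L N. op_linsize_lt L N E (real L / 2 - real lS)}"

end

theory Submission
  imports Defs
begin


definition om :: "nat \<Rightarrow> int \<Rightarrow> complex" where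
  "om N x = cis (2 * pi * of_int x / real N)"

definition tdot :: "nat \<Rightarrow> pvec \<Rightarrow> pvec \<Rightarrow> int" where
  "tdot L b a = (\<Sum>s\<in>torus_sites L. b s * a s)"

definition tshift :: "nat \<Rightarrow> nat \<Rightarrow> conf \<Rightarrow> pvec \<Rightarrow> conf" where
  "tshift L N \<alpha> a = (\<lambda>s. if s \<in> torus_sites L then (\<alpha> s + a s) mod int N else 0)"

definition tadd :: "nat \<Rightarrow> pvec \<Rightarrow> pvec \<Rightarrow> pvec" where
  "tadd N a a' = (\<lambda>s. (a s + a' s) mod int N)"

definition tneg :: "nat \<Rightarrow> pvec \<Rightarrow> pvec" where
  "tneg N a = (\<lambda>s. (- a s) mod int N)"

lemma om_period: "om N (y + int N * k) = om N y"
proof (cases "N = 0")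
  case True then show ?thesis by (simp add: om_def)
next
  case False
  have "2 * pi * of_int (y + int N * k) / real N = 2 * pi * of_int y / real N + 2 * pi * of_int k"
    using False by (simp add: field_simps)
  then show ?thesis unfolding om_def by (simp add: cis_mult[symmetric])
qed

lemma om_mod: "om N (x mod int N) = om N x"
  by (metis om_period mod_mult_div_eq mult.commute)

lemma om_cong: "x mod int N = y mod int N \<Longrightarrow> om N x = om N y"
  by (metis om_mod)

lemma om_add: "om N (x + y) = om N x * om N y"
  unfolding om_def cis_mult by (simp add: add_divide_distrib distrib_left)

lemma om_neg: "om N (- x) = cnj (om N x)"
  unfolding om_def cis_cnj by simp

lemma om_norm[simp]: "cmod (om N x) = 1"
  unfolding om_def by simp

lemma om_nz[simp]: "om N x \<noteq> 0"
  using om_norm[of N x] by (metis norm_zero zero_neq_one)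

lemma om_0[simp]: "om N 0 = 1" by (simp add: om_def)

lemma om_1_dvd:
  assumes "N > 0" "om N x = 1" shows "int N dvd x"
proof -
  have "cos (2 * pi * of_int x / real N) = 1" using assms(2) unfolding om_def
    by (metis Re_complex_of_real cis.sel(1) one_complex.sel(1))
  then obtain n :: int where n: "2 * pi * of_int x / real N = of_int n * 2 * pi"
    using cos_one_2pi_int by blast
  then have "of_int x = real N * of_int n" using assms(1) by (simp add: field_simps)
  then have "x = int N * n" by (metis of_int_eq_iff of_int_mult of_int_of_nat_eq)
  then show ?thesis by simp
qed

lemma W_def2: "W L N a b = (\<lambda>\<beta> \<alpha>. if \<beta> \<in> confs L N \<and> \<alpha> \<in> confs L N \<and>
   (\<forall>s\<in>torus_sites L. \<beta> s = (\<alpha> s + a s) mod int N) then om N (tdot L b \<alpha>) else 0)"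
  unfolding W_def om_def tdot_def by simp

lemma confs_zero_out: "\<beta> \<in> confs L N \<Longrightarrow> s \<notin> torus_sites L \<Longrightarrow> \<beta> s = 0"
  unfolding confs_def tvecs_def by (cases s) auto

lemma confs_range: "\<beta> \<in> confs L N \<Longrightarrow> s \<in> torus_sites L \<Longrightarrow> 0 \<le> \<beta> s \<and> \<beta> s < int N"
  unfolding confs_def tvecs_def by auto

lemma tshift_eq: "\<beta> \<in> confs L N \<Longrightarrow>
   (\<forall>s\<in>torus_sites L. \<beta> s = (\<alpha> s + a s) mod int N) \<longleftrightarrow> \<beta> = tshift L N \<alpha> a"
  unfolding tshift_def using confs_zero_out[of \<beta> L N] by (auto simp: fun_eq_iff)

lemma tshift_confs: "N > 0 \<Longrightarrow> tshift L N \<alpha> a \<in> confs L N"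
  unfolding tshift_def confs_def tvecs_def by auto

lemma W_def3: "W L N a b = (\<lambda>\<beta> \<alpha>. if \<beta> \<in> confs L N \<and> \<alpha> \<in> confs L N \<and>
   \<beta> = tshift L N \<alpha> a then om N (tdot L b \<alpha>) else 0)"
  unfolding W_def2 by (rule ext, rule ext, metis tshift_eq)

lemma finite_torus: "finite (torus_sites L)"
  unfolding torus_sites_def by simp

lemma finite_tvecs: "finite (tvecs L N)"
proof -
  have "tvecs L N \<subseteq> {f. \<forall>x. (x \<in> torus_sites L \<longrightarrow> f x \<in> {0..<int N}) \<and> (x \<notin> torus_sites L \<longrightarrow> f x = 0)}"
    unfolding tvecs_def by auto
  then show ?thesis by (rule finite_subset) (intro finite_set_of_finite_funs finite_torus, simp)
qed

lemma finite_confs: "finite (confs L N)" unfolding confs_def by (rule finite_tvecs)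

lemma mult_assoc: "mult_op L N (mult_op L N A B) C = mult_op L N A (mult_op L N B C)"
proof (rule ext, rule ext)
  fix \<beta> \<alpha>
  show "mult_op L N (mult_op L N A B) C \<beta> \<alpha> = mult_op L N A (mult_op L N B C) \<beta> \<alpha>"
  proof (cases "\<beta> \<in> confs L N \<and> \<alpha> \<in> confs L N")
    case True
    have "(\<Sum>\<gamma>\<in>confs L N. (\<Sum>\<delta>\<in>confs L N. A \<beta> \<delta> * B \<delta> \<gamma>) * C \<gamma> \<alpha>)
        = (\<Sum>\<delta>\<in>confs L N. A \<beta> \<delta> * (\<Sum>\<gamma>\<in>confs L N. B \<delta> \<gamma> * C \<gamma> \<alpha>))"
      unfolding sum_distrib_left sum_distrib_right mult.assoc by (rule sum.swap)
    then show ?thesis using True unfolding mult_op_def by (simp cong: sum.cong)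
  next
    case False then show ?thesis unfolding mult_op_def by auto
  qed
qed

lemma adj_mult: "adj_op (mult_op L N A B) = mult_op L N (adj_op B) (adj_op A)"
  unfolding adj_op_def mult_op_def by (auto simp: fun_eq_iff mult.commute)

lemma adj_adj[simp]: "adj_op (adj_op A) = A" unfolding adj_op_def by simp

lemma smult_mult_left: "mult_op L N (smult_op c A) B = smult_op c (mult_op L N A B)"
  unfolding smult_op_def mult_op_def by (auto simp: fun_eq_iff sum_distrib_left mult.assoc)

lemma smult_mult_right: "mult_op L N A (smult_op c B) = smult_op c (mult_op L N A B)"
  unfolding smult_op_def mult_op_def by (auto simp: fun_eq_iff sum_distrib_left mult.assoc mult.left_commute)

lemma smult_smult[simp]: "smult_op c (smult_op d A) = smult_op (c * d) A"
  unfolding smult_op_def by (auto simp: fun_eq_iff)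

lemma smult_1[simp]: "smult_op 1 A = A"
  unfolding smult_op_def by auto

lemma smult_cancel: "c \<noteq> 0 \<Longrightarrow> smult_op c A = smult_op c B \<Longrightarrow> A = B"
  unfolding smult_op_def by (auto simp: fun_eq_iff)

lemma adj_smult: "adj_op (smult_op c A) = smult_op (cnj c) (adj_op A)"
  unfolding smult_op_def adj_op_def by auto


lemma modl: "((x + y) mod n + z) mod n = (x + (z + y) mod (n::int)) mod n"
  by (metis mod_add_left_eq mod_add_right_eq add.assoc add.commute)

lemma tdot_cong_right:
  assumes "\<And>s. s \<in> torus_sites L \<Longrightarrow> x s mod int N = y s mod int N"
  shows "tdot L b x mod int N = tdot L b y mod int N"
proof -
  have "tdot L b x mod int N = (\<Sum>s\<in>torus_sites L. (b s * x s) mod int N) mod int N"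
    unfolding tdot_def by (simp add: mod_sum_eq)
  also have "\<dots> = (\<Sum>s\<in>torus_sites L. (b s * y s) mod int N) mod int N"
    using assms by (metis (no_types, lifting) mod_mult_right_eq sum.cong)
  also have "\<dots> = tdot L b y mod int N"
    unfolding tdot_def by (simp add: mod_sum_eq)
  finally show ?thesis .
qed

lemma tdot_cong_left:
  assumes "\<And>s. s \<in> torus_sites L \<Longrightarrow> x s mod int N = y s mod int N"
  shows "tdot L x b mod int N = tdot L y b mod int N"
proof -
  have "tdot L x b mod int N = (\<Sum>s\<in>torus_sites L. (x s * b s) mod int N) mod int N"
    unfolding tdot_def by (simp add: mod_sum_eq)
  also have "\<dots> = (\<Sum>s\<in>torus_sites L. (y s * b s) mod int N) mod int N"
    using assms by (metis (no_types, lifting) mod_mult_left_eq sum.cong)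
  also have "\<dots> = tdot L y b mod int N"
    unfolding tdot_def by (simp add: mod_sum_eq)
  finally show ?thesis .
qed

lemma tdot_add_right: "tdot L b (\<lambda>s. x s + y s) = tdot L b x + tdot L b y"
  unfolding tdot_def by (simp add: distrib_left sum.distrib)

lemma tdot_add_left: "tdot L (\<lambda>s. x s + y s) b = tdot L x b + tdot L y b"
  unfolding tdot_def by (simp add: distrib_right sum.distrib)

lemma tdot_neg_left: "tdot L (\<lambda>s. - x s) b = - tdot L x b"
  unfolding tdot_def by (simp add: sum_negf)

lemma tdot_neg_right: "tdot L b (\<lambda>s. - x s) = - tdot L b x"
  unfolding tdot_def by (simp add: sum_negf)

lemma W_mult:
  assumes N: "N > 0"
  shows "mult_op L N (W L N a b) (W L N a' b') =
         smult_op (om N (tdot L b a')) (W L N (tadd N a a') (tadd N b b'))"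
proof (rule ext, rule ext)
  fix \<beta> \<alpha>
  show "mult_op L N (W L N a b) (W L N a' b') \<beta> \<alpha> =
         smult_op (om N (tdot L b a')) (W L N (tadd N a a') (tadd N b b')) \<beta> \<alpha>"
  proof (cases "\<beta> \<in> confs L N \<and> \<alpha> \<in> confs L N")
    case False then show ?thesis unfolding mult_op_def smult_op_def W_def3 by auto
  next
    case True
    define \<gamma>0 where "\<gamma>0 = tshift L N \<alpha> a'"
    have g0: "\<gamma>0 \<in> confs L N" unfolding \<gamma>0_def using N by (rule tshift_confs)
    have "(\<Sum>\<gamma>\<in>confs L N. W L N a b \<beta> \<gamma> * W L N a' b' \<gamma> \<alpha>)
        = (\<Sum>\<gamma>\<in>confs L N. if \<gamma> = \<gamma>0 then W L N a b \<beta> \<gamma> * om N (tdot L b' \<alpha>) else 0)"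
      using True unfolding \<gamma>0_def by (intro sum.cong refl) (auto simp: W_def3)
    also have "\<dots> = W L N a b \<beta> \<gamma>0 * om N (tdot L b' \<alpha>)"
      using g0 finite_confs by (simp add: sum.delta)
    finally have eq1: "(\<Sum>\<gamma>\<in>confs L N. W L N a b \<beta> \<gamma> * W L N a' b' \<gamma> \<alpha>)
        = W L N a b \<beta> \<gamma>0 * om N (tdot L b' \<alpha>)" .
    have ts: "tshift L N \<gamma>0 a = tshift L N \<alpha> (tadd N a a')"
      unfolding \<gamma>0_def tshift_def tadd_def
      by (auto simp: fun_eq_iff modl)
    have "tdot L b \<gamma>0 mod int N = tdot L b (\<lambda>s. \<alpha> s + a' s) mod int N"
      by (rule tdot_cong_right) (simp add: \<gamma>0_def tshift_def)
    then have p1: "om N (tdot L b \<gamma>0) = om N (tdot L b \<alpha>) * om N (tdot L b a')"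
      by (metis om_cong om_add tdot_add_right)
    have "tdot L (tadd N b b') \<alpha> mod int N = tdot L (\<lambda>s. b s + b' s) \<alpha> mod int N"
      by (rule tdot_cong_left) (simp add: tadd_def)
    then have p2: "om N (tdot L (tadd N b b') \<alpha>) = om N (tdot L b \<alpha>) * om N (tdot L b' \<alpha>)"
      by (metis om_cong om_add tdot_add_left)
    show ?thesis using True g0 unfolding mult_op_def smult_op_def
      apply (simp only: eq1 if_True)
      apply (simp add: W_def3 ts p1 p2)
      done
  qed
qed


lemma tadd_comm: "tadd N a a' = tadd N a' a"
  unfolding tadd_def by (simp add: add.commute)

lemma W_comm:
  assumes N: "N > 0"
  shows "mult_op L N (W L N a b) (W L N a' b') =
         smult_op (om N (tdot L b a' - tdot L b' a)) (mult_op L N (W L N a' b') (W L N a b))"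
proof -
  have "om N (tdot L b a') = om N (tdot L b a' - tdot L b' a) * om N (tdot L b' a)"
    by (simp add: om_add[symmetric])
  moreover have "tadd N a' a = tadd N a a'" "tadd N b' b = tadd N b b'" by (rule tadd_comm)+
  ultimately show ?thesis unfolding W_mult[OF N] smult_smult by simp
qed

lemma m1: "(x + (- a) mod (n::int)) mod n = (x - a) mod n"
  by (simp add: mod_add_right_eq)
lemma m2: "((b + a) mod (n::int) - a) mod n = b mod n"
  by (metis add_diff_cancel_right' mod_diff_left_eq)
lemma m3: "((b - a) mod (n::int) + a) mod n = b mod n"
  by (metis diff_add_cancel mod_add_left_eq)

lemma tshift_neg_iff:
  assumes "\<alpha> \<in> confs L N" "\<beta> \<in> confs L N"
  shows "\<alpha> = tshift L N \<beta> a \<longleftrightarrow> \<beta> = tshift L N \<alpha> (tneg N a)"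
proof -
  have "\<alpha> s = (\<beta> s + a s) mod int N \<longleftrightarrow> \<beta> s = (\<alpha> s + (- a s) mod int N) mod int N"
    if "s \<in> torus_sites L" for s
  proof -
    have r1: "0 \<le> \<alpha> s \<and> \<alpha> s < int N" using confs_range[OF assms(1) that] .
    have r2: "0 \<le> \<beta> s \<and> \<beta> s < int N" using confs_range[OF assms(2) that] .
    have e: "(\<alpha> s + (- a s) mod int N) mod int N = (\<alpha> s - a s) mod int N"
      by (rule m1)
    show ?thesis unfolding e
    proof
      assume h: "\<alpha> s = (\<beta> s + a s) mod int N"
      have "(\<alpha> s - a s) mod int N = ((\<beta> s + a s) mod int N - a s) mod int N" using h by simp
      also have "\<dots> = \<beta> s mod int N" by (rule m2)
      also have "\<dots> = \<beta> s" using r2 by simp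
      finally show "\<beta> s = (\<alpha> s - a s) mod int N" by simp
    next
      assume h: "\<beta> s = (\<alpha> s - a s) mod int N"
      have "(\<beta> s + a s) mod int N = ((\<alpha> s - a s) mod int N + a s) mod int N" using h by simp
      also have "\<dots> = \<alpha> s mod int N" by (rule m3)
      also have "\<dots> = \<alpha> s" using r1 by simp
      finally show "\<alpha> s = (\<beta> s + a s) mod int N" by simp
    qed
  qed
  then have "(\<forall>s\<in>torus_sites L. \<alpha> s = (\<beta> s + a s) mod int N) \<longleftrightarrow>
      (\<forall>s\<in>torus_sites L. \<beta> s = (\<alpha> s + tneg N a s) mod int N)"
    unfolding tneg_def by blast
  then show ?thesis using tshift_eq[OF assms(1), of \<beta> a] tshift_eq[OF assms(2), of \<alpha> "tneg N a"]
    by simp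
qed

lemma W_adj:
  assumes N: "N > 0"
  shows "adj_op (W L N a b) = smult_op (om N (tdot L b a)) (W L N (tneg N a) (tneg N b))"
proof (rule ext, rule ext)
  fix \<beta> \<alpha>
  show "adj_op (W L N a b) \<beta> \<alpha> = smult_op (om N (tdot L b a)) (W L N (tneg N a) (tneg N b)) \<beta> \<alpha>"
  proof (cases "\<beta> \<in> confs L N \<and> \<alpha> \<in> confs L N")
    case False then show ?thesis unfolding adj_op_def smult_op_def W_def3 by auto
  next
    case bc: True
    have iff: "\<alpha> = tshift L N \<beta> a \<longleftrightarrow> \<beta> = tshift L N \<alpha> (tneg N a)"
      using tshift_neg_iff[of \<alpha> L N \<beta> a] bc by simp
    show ?thesis
    proof (cases "\<alpha> = tshift L N \<beta> a")
      case True
      then have t2: "\<beta> = tshift L N \<alpha> (tneg N a)" using iff by simp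
      have "tdot L b \<alpha> mod int N = tdot L b (\<lambda>s. \<beta> s + a s) mod int N"
        using True by (intro tdot_cong_right) (simp add: tshift_def)
      then have q1: "om N (tdot L b \<alpha>) = om N (tdot L b \<beta>) * om N (tdot L b a)"
        by (metis om_cong om_add tdot_add_right)
      have "tdot L (tneg N b) \<alpha> mod int N = tdot L (\<lambda>s. - b s) \<alpha> mod int N"
        by (intro tdot_cong_left) (simp add: tneg_def)
      then have q2: "om N (tdot L (tneg N b) \<alpha>) = cnj (om N (tdot L b \<alpha>))"
        by (metis om_cong om_neg tdot_neg_left)
      have key: "cnj (om N (tdot L b \<beta>)) = om N (tdot L b a) * cnj (om N (tdot L b \<alpha>))"
        unfolding q1 by (simp add: om_neg[symmetric] om_add[symmetric])
      have l: "adj_op (W L N a b) \<beta> \<alpha> = cnj (om N (tdot L b \<beta>))"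
        using bc True unfolding adj_op_def W_def3 by simp
      have r: "W L N (tneg N a) (tneg N b) \<beta> \<alpha> = om N (tdot L (tneg N b) \<alpha>)"
        using bc t2 unfolding W_def3 by simp
      show ?thesis unfolding smult_op_def l r q2 key ..
    next
      case False
      then have f2: "\<beta> \<noteq> tshift L N \<alpha> (tneg N a)" using iff by simp
      have l: "adj_op (W L N a b) \<beta> \<alpha> = 0"
        using False unfolding adj_op_def W_def3 by simp
      have r: "W L N (tneg N a) (tneg N b) \<beta> \<alpha> = 0"
        using f2 unfolding W_def3 by simp
      show ?thesis unfolding smult_op_def l r by simp
    qed
  qed
qed

lemma zero_confs: "N > 0 \<Longrightarrow> (\<lambda>_. 0) \<in> confs L N"
  unfolding confs_def tvecs_def by auto

lemma W_nonzero:
  assumes N: "N > 0" and a: "a \<in> tvecs L N"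
  shows "W L N a b a (\<lambda>_. 0) \<noteq> 0"
proof -
  have "tshift L N (\<lambda>_. 0) a = a" using a unfolding tshift_def tvecs_def
    by (auto simp: fun_eq_iff)
  then show ?thesis using a zero_confs[OF N] unfolding W_def3 by (simp add: confs_def)
qed

lemma tadd_tvecs: "N > 0 \<Longrightarrow> a \<in> tvecs L N \<Longrightarrow> a' \<in> tvecs L N \<Longrightarrow> tadd N a a' \<in> tvecs L N"
  unfolding tvecs_def tadd_def by auto

lemma tneg_tvecs: "N > 0 \<Longrightarrow> a \<in> tvecs L N \<Longrightarrow> tneg N a \<in> tvecs L N"
  unfolding tvecs_def tneg_def by auto

lemma E_form:
  assumes N: "N > 0"
  shows "mult_op L N (smult_op c1 (W L N a1 b1)) (adj_op (smult_op c2 (W L N a2 b2))) =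
     smult_op (c1 * cnj c2 * om N (tdot L b2 a2) * om N (tdot L b1 (tneg N a2)))
        (W L N (tadd N a1 (tneg N a2)) (tadd N b1 (tneg N b2)))"
proof -
  have "mult_op L N (smult_op c1 (W L N a1 b1)) (adj_op (smult_op c2 (W L N a2 b2))) =
    smult_op c1 (smult_op (cnj c2) (smult_op (om N (tdot L b2 a2))
       (mult_op L N (W L N a1 b1) (W L N (tneg N a2) (tneg N b2)))))"
    unfolding adj_smult W_adj[OF N] smult_mult_left smult_mult_right smult_smult by (simp add: mult_ac)
  also have "\<dots> = smult_op c1 (smult_op (cnj c2) (smult_op (om N (tdot L b2 a2))
       (smult_op (om N (tdot L b1 (tneg N a2))) (W L N (tadd N a1 (tneg N a2)) (tadd N b1 (tneg N b2))))))"
    unfolding W_mult[OF N] ..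
  finally show ?thesis by (simp only: smult_smult mult.assoc)
qed


definition col :: "op \<Rightarrow> conf \<Rightarrow> (conf \<Rightarrow> complex)" where
  "col Y \<alpha> = (\<lambda>\<beta>. Y \<beta> \<alpha>)"

lemma apply_delta: "\<alpha> \<in> confs L N \<Longrightarrow> apply_op L N P (\<lambda>\<gamma>. if \<gamma> = \<alpha> then 1 else 0) = col P \<alpha>"
proof (rule ext)
  fix \<beta> assume a: "\<alpha> \<in> confs L N"
  have "(\<Sum>\<gamma>\<in>confs L N. P \<beta> \<gamma> * (if \<gamma> = \<alpha> then 1 else 0)) = (\<Sum>\<gamma>\<in>confs L N. if \<gamma> = \<alpha> then P \<beta> \<gamma> else 0)"
    by (rule sum.cong) auto
  also have "\<dots> = P \<beta> \<alpha>" using a finite_confs by (simp add: sum.delta)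
  finally show "apply_op L N P (\<lambda>\<gamma>. if \<gamma> = \<alpha> then 1 else 0) \<beta> = col P \<alpha> \<beta>"
    unfolding apply_op_def col_def .
qed

lemma P_col: "is_proj_onto L N P V \<Longrightarrow> \<alpha> \<in> confs L N \<Longrightarrow> col P \<alpha> \<in> V"
  unfolding is_proj_onto_def by (metis apply_delta)

lemma BP:
  assumes P: "is_proj_onto L N P (code_space L N T)" and B: "B \<in> T"
  shows "mult_op L N B P = P"
proof (rule ext, rule ext)
  fix \<beta> \<alpha>
  show "mult_op L N B P \<beta> \<alpha> = P \<beta> \<alpha>"
  proof (cases "\<beta> \<in> confs L N \<and> \<alpha> \<in> confs L N")
    case True
    then have "col P \<alpha> \<in> code_space L N T" using P_col[OF P] by simp
    then have "apply_op L N B (col P \<alpha>) = col P \<alpha>" using B unfolding code_space_def by simp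
    then have "apply_op L N B (col P \<alpha>) \<beta> = P \<beta> \<alpha>" by (simp add: col_def)
    then show ?thesis using True unfolding mult_op_def apply_op_def col_def by simp
  next
    case False
    then show ?thesis using P unfolding mult_op_def is_proj_onto_def by auto
  qed
qed

lemma PB:
  assumes P: "is_proj_onto L N P (code_space L N T)" and B: "adj_op B \<in> T"
  shows "mult_op L N P B = P"
proof -
  have "mult_op L N (adj_op B) P = P" by (rule BP[OF P B])
  then have "adj_op (mult_op L N (adj_op B) P) = adj_op P" by simp
  moreover have "adj_op P = P" using P unfolding is_proj_onto_def by simp
  ultimately show ?thesis unfolding adj_mult adj_adj by simp
qed

lemma fix_cols:
  assumes P: "is_proj_onto L N P (code_space L N T)"
    and Y: "\<And>\<beta> \<alpha>. \<beta> \<notin> confs L N \<or> \<alpha> \<notin> confs L N \<Longrightarrow> Y \<beta> \<alpha> = 0"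
    and Brow: "\<And>B \<beta> \<alpha>. B \<in> T \<Longrightarrow> \<beta> \<notin> confs L N \<Longrightarrow> B \<beta> \<alpha> = 0"
    and BY: "\<And>B. B \<in> T \<Longrightarrow> mult_op L N B Y = Y"
  shows "mult_op L N P Y = Y"
proof (rule ext, rule ext)
  fix \<beta> \<alpha>
  have inV: "col Y \<alpha> \<in> code_space L N T"
    unfolding code_space_def
  proof (intro CollectI conjI allI impI ballI)
    fix x assume "x \<notin> confs L N" then show "col Y \<alpha> x = 0" using Y by (simp add: col_def)
  next
    fix B assume B: "B \<in> T"
    show "apply_op L N B (col Y \<alpha>) = col Y \<alpha>"
    proof (rule ext)
      fix x
      show "apply_op L N B (col Y \<alpha>) x = col Y \<alpha> x"
      proof (cases "x \<in> confs L N \<and> \<alpha> \<in> confs L N")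
        case True
        have "mult_op L N B Y x \<alpha> = Y x \<alpha>" using BY[OF B] by simp
        then show ?thesis using True unfolding mult_op_def apply_op_def col_def by simp
      next
        case False
        then have "x \<notin> confs L N \<or> \<alpha> \<notin> confs L N" by blast
        then show ?thesis
        proof
          assume "x \<notin> confs L N"
          then show ?thesis using Brow[OF B] Y unfolding apply_op_def col_def by simp
        next
          assume "\<alpha> \<notin> confs L N"
          then show ?thesis using Y unfolding apply_op_def col_def by simp
        qed
      qed
    qed
  qed
  then have "apply_op L N P (col Y \<alpha>) = col Y \<alpha>" using P unfolding is_proj_onto_def by blast
  then have "apply_op L N P (col Y \<alpha>) \<beta> = Y \<beta> \<alpha>" by (simp add: col_def)
  then show "mult_op L N P Y \<beta> \<alpha> = Y \<beta> \<alpha>"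
    unfolding mult_op_def apply_op_def col_def using Y by auto
qed

lemma gen_sub: "op_group L N S \<Longrightarrow> X \<subseteq> S \<Longrightarrow> op_group_gen L N X \<subseteq> S"
  unfolding op_group_gen_def by blast

lemma gen_adj: "A \<in> op_group_gen L N X \<Longrightarrow> adj_op A \<in> op_group_gen L N X"
  unfolding op_group_gen_def op_group_def by blast

lemma gen_base: "X \<subseteq> op_group_gen L N X"
  unfolding op_group_gen_def by blast

lemma pauli_row: "A \<in> torus_paulis L N \<Longrightarrow> \<beta> \<notin> confs L N \<Longrightarrow> A \<beta> \<alpha> = 0"
  unfolding torus_paulis_def smult_op_def W_def by auto


definition tr :: "nat \<Rightarrow> site \<Rightarrow> site" where
  "tr L p = (fst p mod int L, snd p mod int L)"

definition vadd :: "site \<Rightarrow> site \<Rightarrow> site" where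
  "vadd p k = (fst p + fst k, snd p + snd k)"

lemma tr_torus: "L > 0 \<Longrightarrow> tr L p \<in> torus_sites L"
  unfolding tr_def torus_sites_def by auto

lemma tdot_comm: "tdot L a b = tdot L b a"
  unfolding tdot_def by (simp add: mult.commute)

lemma sum_mod_cong:
  assumes "\<And>p. p \<in> F \<Longrightarrow> f p mod (M::int) = g p mod M"
  shows "sum f F mod M = sum g F mod M"
proof -
  have "sum f F mod M = (\<Sum>p\<in>F. f p mod M) mod M" by (simp add: mod_sum_eq)
  also have "\<dots> = (\<Sum>p\<in>F. g p mod M) mod M" using assms by (metis (no_types, lifting) sum.cong)
  also have "\<dots> = sum g F mod M" by (simp add: mod_sum_eq)
  finally show ?thesis .
qed

lemma wrap_fiber:
  assumes t: "t \<in> torus_sites L" and F: "finite F" and sF: "{p. f p \<noteq> 0} \<subseteq> F"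
  shows "wrap L N f t = (\<Sum>p\<in>{p\<in>F. tr L p = t}. f p) mod int N"
proof -
  have "(\<Sum>p\<in>{p. f p \<noteq> 0 \<and> (fst p mod int L, snd p mod int L) = t}. f p) = (\<Sum>p\<in>{p\<in>F. tr L p = t}. f p)"
    by (rule sum.mono_neutral_left) (use F sF in \<open>auto simp: tr_def\<close>)
  then show ?thesis using t unfolding wrap_def by simp
qed

lemma wrap1:
  assumes L: "L > 0" and F: "finite F" and sF: "{p. f p \<noteq> 0} \<subseteq> F"
  shows "tdot L (wrap L N f) h mod int N = (\<Sum>p\<in>F. f p * h (tr L p)) mod int N"
proof -
  have "tdot L (wrap L N f) h mod int N =
      (\<Sum>t\<in>torus_sites L. (\<Sum>p\<in>{p\<in>F. tr L p = t}. f p) * h t) mod int N"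
    unfolding tdot_def
  proof (rule sum_mod_cong)
    fix t assume t: "t \<in> torus_sites L"
    show "wrap L N f t * h t mod int N = (\<Sum>p\<in>{p\<in>F. tr L p = t}. f p) * h t mod int N"
      unfolding wrap_fiber[OF t F sF] by (simp add: mod_mult_left_eq)
  qed
  also have "(\<Sum>t\<in>torus_sites L. (\<Sum>p\<in>{p\<in>F. tr L p = t}. f p) * h t)
      = (\<Sum>t\<in>torus_sites L. (\<Sum>p\<in>{p\<in>F. tr L p = t}. f p * h (tr L p)))"
    by (rule sum.cong) (auto simp: sum_distrib_right)
  also have "\<dots> = (\<Sum>p\<in>F. f p * h (tr L p))"
    by (rule sum.group) (use F finite_torus tr_torus[OF L] in auto)
  finally show ?thesis .
qed

lemma wrap1':
  assumes L: "L > 0" and F: "finite F" and sF: "{p. f p \<noteq> 0} \<subseteq> F"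
  shows "tdot L h (wrap L N f) mod int N = (\<Sum>p\<in>F. f p * h (tr L p)) mod int N"
  using wrap1[OF assms] by (simp add: tdot_comm)

lemma wrap_tvecs: "N > 0 \<Longrightarrow> wrap L N f \<in> tvecs L N"
  unfolding wrap_def tvecs_def by auto


definition psum :: "(pvec \<times> pvec) \<Rightarrow> (pvec \<times> pvec) \<Rightarrow> site set \<Rightarrow> int" where
  "psum v w F = (\<Sum>p\<in>F. snd v p * fst w p - snd w p * fst v p)"

lemma pcomm_F:
  assumes F: "finite F" and sub: "psupp v \<union> psupp w \<subseteq> F"
  shows "pcomm N v w \<longleftrightarrow> psum v w F mod int N = 0"
proof -
  have fin: "finite (psupp v \<union> psupp w)" using F sub finite_subset by blast
  have "psum v w (psupp v \<union> psupp w) = psum v w F"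
    unfolding psum_def by (rule sum.mono_neutral_left[OF F sub]) (auto simp: psupp_def)
  then show ?thesis unfolding pcomm_def psum_def by simp
qed

lemma psum_left_supp:
  assumes F: "finite F" and sub: "psupp v \<subseteq> F"
  shows "psum v w F = (\<Sum>p\<in>psupp v. snd v p * fst w p - snd w p * fst v p)"
  unfolding psum_def by (rule sum.mono_neutral_right[OF F sub]) (auto simp: psupp_def)

lemma pvecs_fin: "v \<in> pvecs N \<Longrightarrow> finite (psupp v)"
  unfolding pvecs_def by simp

lemma psupp_padd: "psupp (padd N v w) \<subseteq> psupp v \<union> psupp w"
  unfolding psupp_def padd_def by auto

lemma psupp_pneg: "psupp (pneg N v) \<subseteq> psupp v"
  unfolding psupp_def pneg_def by auto

lemma padd_pvecs: "N > 0 \<Longrightarrow> v \<in> pvecs N \<Longrightarrow> w \<in> pvecs N \<Longrightarrow> padd N v w \<in> pvecs N"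
  unfolding pvecs_def using psupp_padd[of N v w] finite_subset
  by (auto simp: padd_def)

lemma pneg_pvecs: "N > 0 \<Longrightarrow> v \<in> pvecs N \<Longrightarrow> pneg N v \<in> pvecs N"
  unfolding pvecs_def using psupp_pneg[of N v] finite_subset
  by (auto simp: pneg_def)

lemma mm: "((a mod n) * b - c * (d mod n)) mod n = (a * b - c * d) mod (n::int)"
proof -
  have "((a mod n) * b - c * (d mod n)) mod n = (((a mod n) * b) mod n - (c * (d mod n)) mod n) mod n"
    by (simp add: mod_diff_eq)
  also have "\<dots> = ((a * b) mod n - (c * d) mod n) mod n"
    by (simp add: mod_mult_left_eq mod_mult_right_eq)
  also have "\<dots> = (a * b - c * d) mod n" by (simp add: mod_diff_eq)
  finally show ?thesis .
qed

lemma C_subgroup: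
  assumes N: "N > 0" and e: "e \<in> pvecs N"
  shows "plane_subgroup N {v\<in>pvecs N. pcomm N v e}"
  unfolding plane_subgroup_def
proof (intro conjI ballI)
  show "{v \<in> pvecs N. pcomm N v e} \<subseteq> pvecs N" by blast
  have "pzero \<in> pvecs N" unfolding pvecs_def pzero_def psupp_def using N by simp
  moreover have "pcomm N pzero e"
    unfolding pcomm_def pzero_def by simp
  ultimately show "pzero \<in> {v \<in> pvecs N. pcomm N v e}" by blast
next
  fix v w assume v: "v \<in> {v \<in> pvecs N. pcomm N v e}" and w: "w \<in> {v \<in> pvecs N. pcomm N v e}"
  define F where "F = psupp v \<union> psupp w \<union> psupp e"
  have vv: "v \<in> pvecs N" "pcomm N v e" using v by simp_all
  have ww: "w \<in> pvecs N" "pcomm N w e" using w by simp_all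
  have F: "finite F" unfolding F_def using pvecs_fin[OF vv(1)] pvecs_fin[OF ww(1)] pvecs_fin[OF e] by simp
  have s1: "psupp v \<union> psupp e \<subseteq> F" "psupp w \<union> psupp e \<subseteq> F" unfolding F_def by blast+
  have cv: "int N dvd psum v e F" using vv(2) pcomm_F[OF F s1(1)] by (simp add: mod_eq_0_iff_dvd)
  have cw: "int N dvd psum w e F" using ww(2) pcomm_F[OF F s1(2)] by (simp add: mod_eq_0_iff_dvd)
  have "psum (padd N v w) e F mod int N = (psum v e F + psum w e F) mod int N"
    unfolding psum_def sum.distrib[symmetric]
  proof (rule sum_mod_cong)
    fix p
    let ?vb = "snd v p" and ?wb = "snd w p" and ?va = "fst v p" and ?wa = "fst w p" and ?ea = "fst e p" and ?eb = "snd e p"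
    have 1: "((?vb + ?wb) mod int N * ?ea - ?eb * ((?va + ?wa) mod int N)) mod int N
        = ((?vb + ?wb) * ?ea - ?eb * (?va + ?wa)) mod int N"
      by (rule mm)
    have 2: "(?vb + ?wb) * ?ea - ?eb * (?va + ?wa) = (?vb * ?ea - ?eb * ?va) + (?wb * ?ea - ?eb * ?wa)"
      by (simp add: algebra_simps)
    have 3: "snd (padd N v w) p = (?vb + ?wb) mod int N" "fst (padd N v w) p = (?va + ?wa) mod int N"
      unfolding padd_def by simp_all
    show "(snd (padd N v w) p * ?ea - ?eb * fst (padd N v w) p) mod int N =
         (snd v p * fst e p - snd e p * fst v p + (snd w p * fst e p - snd e p * fst w p)) mod int N"
      unfolding 3 1 2 ..
  qed
  moreover have "int N dvd psum v e F + psum w e F" using cv cw by (rule dvd_add)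
  ultimately have z: "psum (padd N v w) e F mod int N = 0" by (simp add: mod_eq_0_iff_dvd)
  have sub: "psupp (padd N v w) \<union> psupp e \<subseteq> F" using psupp_padd[of N v w] unfolding F_def by blast
  have "pcomm N (padd N v w) e" using pcomm_F[OF F sub] z by simp
  then show "padd N v w \<in> {v \<in> pvecs N. pcomm N v e}" using padd_pvecs[OF N vv(1) ww(1)] by simp
next
  fix v assume v: "v \<in> {v \<in> pvecs N. pcomm N v e}"
  define F where "F = psupp v \<union> psupp e"
  have vv: "v \<in> pvecs N" "pcomm N v e" using v by simp_all
  have F: "finite F" unfolding F_def using pvecs_fin[OF vv(1)] pvecs_fin[OF e] by simp
  have s1: "psupp v \<union> psupp e \<subseteq> F" unfolding F_def by blast
  have cv: "int N dvd psum v e F" using vv(2) pcomm_F[OF F s1] by (simp add: mod_eq_0_iff_dvd)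
  have "psum (pneg N v) e F mod int N = (- psum v e F) mod int N"
    unfolding psum_def sum_negf[symmetric]
  proof (rule sum_mod_cong)
    fix p
    let ?vb = "snd v p" and ?va = "fst v p" and ?ea = "fst e p" and ?eb = "snd e p"
    have 1: "((- ?vb) mod int N * ?ea - ?eb * ((- ?va) mod int N)) mod int N
        = ((- ?vb) * ?ea - ?eb * (- ?va)) mod int N"
      by (rule mm)
    have 2: "(- ?vb) * ?ea - ?eb * (- ?va) = - (?vb * ?ea - ?eb * ?va)"
      by (simp add: algebra_simps)
    have 3: "snd (pneg N v) p = (- ?vb) mod int N" "fst (pneg N v) p = (- ?va) mod int N"
      unfolding pneg_def by simp_all
    show "(snd (pneg N v) p * ?ea - ?eb * fst (pneg N v) p) mod int N =
         - (snd v p * fst e p - snd e p * fst v p) mod int N"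
      unfolding 3 1 2 ..
  qed
  moreover have "int N dvd - psum v e F" using cv by simp
  ultimately have z: "psum (pneg N v) e F mod int N = 0" by (simp add: mod_eq_0_iff_dvd)
  have sub: "psupp (pneg N v) \<union> psupp e \<subseteq> F" using psupp_pneg[of N v] unfolding F_def by blast
  have "pcomm N (pneg N v) e" using pcomm_F[OF F sub] z by simp
  then show "pneg N v \<in> {v \<in> pvecs N. pcomm N v e}" using pneg_pvecs[OF N vv(1)] by simp
qed

lemma span_sub: "plane_subgroup N H \<Longrightarrow> X \<subseteq> H \<Longrightarrow> plane_span N X \<subseteq> H"
  unfolding plane_span_def by blast

lemma pcomm_sym:
  assumes "finite (psupp v)" "finite (psupp w)"
  shows "pcomm N v w \<longleftrightarrow> pcomm N w v"
proof -
  have F: "finite (psupp v \<union> psupp w)" using assms by blast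
  have "psum w v (psupp v \<union> psupp w) = - psum v w (psupp v \<union> psupp w)"
    unfolding psum_def sum_negf[symmetric] by (rule sum.cong) auto
  moreover have "pcomm N v w \<longleftrightarrow> int N dvd psum v w (psupp v \<union> psupp w)"
    using pcomm_F[OF F, of v w N] by (simp add: mod_eq_0_iff_dvd)
  moreover have "pcomm N w v \<longleftrightarrow> int N dvd psum w v (psupp v \<union> psupp w)"
    using pcomm_F[OF F, of w v N] by (simp add: mod_eq_0_iff_dvd Un_commute)
  ultimately show ?thesis by simp
qed


lemma psupp_pshift: "psupp (pshift u g) \<subseteq> (\<lambda>q. (fst q + fst u, snd q + snd u)) ` psupp g"
proof
  fix p assume "p \<in> psupp (pshift u g)"
  then have "(fst p - fst u, snd p - snd u) \<in> psupp g" unfolding psupp_def pshift_def by simp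
  moreover have "p = (\<lambda>q. (fst q + fst u, snd q + snd u)) (fst p - fst u, snd p - snd u)" by simp
  ultimately show "p \<in> (\<lambda>q. (fst q + fst u, snd q + snd u)) ` psupp g" by blast
qed

lemma fin_pshift: "finite (psupp g) \<Longrightarrow> finite (psupp (pshift u g))"
  using psupp_pshift[of u g] finite_surj by blast

lemma reidx:
  assumes L: "L > 0" and p: "p \<in> Ss" and fSg: "finite Sg"
    and K: "K = (\<lambda>(p,q). (fst q - fst p, snd q - snd p)) ` {(p,q). p \<in> Ss \<and> q \<in> Sg \<and> tr L p = tr L q}"
    and X: "\<And>q. q \<notin> Sg \<Longrightarrow> X q = 0" and fK: "finite K"
  shows "(\<Sum>q\<in>{q\<in>Sg. tr L q = tr L p}. X q) = (\<Sum>k\<in>K. X (vadd p k))"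
proof -
  have inj: "inj_on (vadd p) {k\<in>K. vadd p k \<in> Sg}" unfolding inj_on_def vadd_def by auto
  have img: "vadd p ` {k\<in>K. vadd p k \<in> Sg} = {q\<in>Sg. tr L q = tr L p}"
  proof (intro equalityI subsetI)
    fix q assume "q \<in> vadd p ` {k\<in>K. vadd p k \<in> Sg}"
    then obtain k where k: "k \<in> K" "vadd p k \<in> Sg" "q = vadd p k" by blast
    from k(1) obtain p' q' where pq: "p' \<in> Ss" "q' \<in> Sg" "tr L p' = tr L q'"
      "k = (fst q' - fst p', snd q' - snd p')" unfolding K by (auto simp: image_iff)
    have m1: "fst q' mod int L = fst p' mod int L" "snd q' mod int L = snd p' mod int L"
      using pq(3) unfolding tr_def by simp_all
    have "(fst p + (fst q' - fst p')) mod int L = fst p mod int L"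
      using m1(1) by (metis add.right_neutral mod_add_right_eq mod_diff_eq mod_self diff_self)
    moreover have "(snd p + (snd q' - snd p')) mod int L = snd p mod int L"
      using m1(2) by (metis add.right_neutral mod_add_right_eq mod_diff_eq mod_self diff_self)
    ultimately have "tr L q = tr L p" unfolding k(3) pq(4) tr_def vadd_def by simp
    then show "q \<in> {q\<in>Sg. tr L q = tr L p}" using k by simp
  next
    fix q assume q: "q \<in> {q\<in>Sg. tr L q = tr L p}"
    let ?k = "(fst q - fst p, snd q - snd p)"
    have "(p, q) \<in> {(p,q). p \<in> Ss \<and> q \<in> Sg \<and> tr L p = tr L q}" using p q by simp
    then have "?k \<in> K" unfolding K by force
    moreover have "vadd p ?k = q" unfolding vadd_def by simp
    ultimately show "q \<in> vadd p ` {k\<in>K. vadd p k \<in> Sg}" using q by force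
  qed
  have "(\<Sum>k\<in>K. X (vadd p k)) = (\<Sum>k\<in>{k\<in>K. vadd p k \<in> Sg}. X (vadd p k))"
    by (rule sum.mono_neutral_right) (use fK X in auto)
  also have "\<dots> = (\<Sum>q\<in>vadd p ` {k\<in>K. vadd p k \<in> Sg}. X q)"
    by (rule sum.reindex[OF inj, symmetric, unfolded comp_def])
  finally show ?thesis unfolding img by simp
qed


lemma wrap2:
  assumes L: "L > 0" and N: "N > 0" and fs: "finite (psupp s)" and fg: "finite (psupp g)"
    and comm: "\<And>u. pcomm N s (pshift u g)"
  shows "int N dvd tdot L (wrap L N (snd s)) (wrap L N (fst g)) - tdot L (wrap L N (snd g)) (wrap L N (fst s))"
proof -
  define Ss where "Ss = psupp s"
  define Sg where "Sg = psupp g"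
  define K where "K = (\<lambda>(p,q). (fst q - fst p, snd q - snd p)) ` {(p,q). p \<in> Ss \<and> q \<in> Sg \<and> tr L p = tr L q}"
  have fSs: "finite Ss" and fSg: "finite Sg" using fs fg unfolding Ss_def Sg_def by auto
  have fK: "finite K" unfolding K_def
    by (rule finite_imageI, rule finite_subset[of _ "Ss \<times> Sg"]) (use fSs fSg in auto)
  have sSs1: "{p. snd s p \<noteq> 0} \<subseteq> Ss" and sSs2: "{p. fst s p \<noteq> 0} \<subseteq> Ss"
    unfolding Ss_def psupp_def by auto
  have sSg1: "{p. fst g p \<noteq> 0} \<subseteq> Sg" and sSg2: "{p. snd g p \<noteq> 0} \<subseteq> Sg"
    unfolding Sg_def psupp_def by auto
  define fib where "fib p = {q\<in>Sg. tr L q = tr L p}" for p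
  have A1: "tdot L (wrap L N (snd s)) (wrap L N (fst g)) mod int N
      = (\<Sum>p\<in>Ss. snd s p * (\<Sum>q\<in>fib p. fst g q)) mod int N"
  proof -
    have "tdot L (wrap L N (snd s)) (wrap L N (fst g)) mod int N
        = (\<Sum>p\<in>Ss. snd s p * wrap L N (fst g) (tr L p)) mod int N"
      by (rule wrap1[OF L fSs sSs1])
    also have "\<dots> = (\<Sum>p\<in>Ss. snd s p * (\<Sum>q\<in>fib p. fst g q)) mod int N"
    proof (rule sum_mod_cong)
      fix p assume "p \<in> Ss"
      have "wrap L N (fst g) (tr L p) = (\<Sum>q\<in>fib p. fst g q) mod int N"
        unfolding fib_def by (rule wrap_fiber[OF tr_torus[OF L] fSg sSg1])
      then show "snd s p * wrap L N (fst g) (tr L p) mod int N = snd s p * (\<Sum>q\<in>fib p. fst g q) mod int N"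
        by (simp add: mod_mult_right_eq)
    qed
    finally show ?thesis .
  qed
  have A2: "tdot L (wrap L N (snd g)) (wrap L N (fst s)) mod int N
      = (\<Sum>p\<in>Ss. fst s p * (\<Sum>q\<in>fib p. snd g q)) mod int N"
  proof -
    have "tdot L (wrap L N (snd g)) (wrap L N (fst s)) mod int N
        = (\<Sum>p\<in>Ss. fst s p * wrap L N (snd g) (tr L p)) mod int N"
      by (rule wrap1'[OF L fSs sSs2])
    also have "\<dots> = (\<Sum>p\<in>Ss. fst s p * (\<Sum>q\<in>fib p. snd g q)) mod int N"
    proof (rule sum_mod_cong)
      fix p assume "p \<in> Ss"
      have "wrap L N (snd g) (tr L p) = (\<Sum>q\<in>fib p. snd g q) mod int N"
        unfolding fib_def by (rule wrap_fiber[OF tr_torus[OF L] fSg sSg2])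
      then show "fst s p * wrap L N (snd g) (tr L p) mod int N = fst s p * (\<Sum>q\<in>fib p. snd g q) mod int N"
        by (simp add: mod_mult_right_eq)
    qed
    finally show ?thesis .
  qed
  have R: "(\<Sum>q\<in>fib p. X q) = (\<Sum>k\<in>K. X (vadd p k))"
    if "p \<in> Ss" "\<And>q. q \<notin> Sg \<Longrightarrow> X q = 0" for p X
    unfolding fib_def by (rule reidx[OF L that(1) fSg K_def that(2) fK])
  have zg1: "fst g q = 0" and zg2: "snd g q = 0" if "q \<notin> Sg" for q
    using that unfolding Sg_def psupp_def by auto
  define D where "D = (\<Sum>p\<in>Ss. snd s p * (\<Sum>q\<in>fib p. fst g q)) - (\<Sum>p\<in>Ss. fst s p * (\<Sum>q\<in>fib p. snd g q))"
  have "D = (\<Sum>p\<in>Ss. \<Sum>k\<in>K. snd s p * fst g (vadd p k) - snd g (vadd p k) * fst s p)"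
  proof -
    have "D = (\<Sum>p\<in>Ss. snd s p * (\<Sum>q\<in>fib p. fst g q) - fst s p * (\<Sum>q\<in>fib p. snd g q))"
      unfolding D_def by (simp add: sum_subtractf)
    also have "\<dots> = (\<Sum>p\<in>Ss. snd s p * (\<Sum>k\<in>K. fst g (vadd p k)) - fst s p * (\<Sum>k\<in>K. snd g (vadd p k)))"
    proof (rule sum.cong[OF refl])
      fix p assume p: "p \<in> Ss"
      show "snd s p * (\<Sum>q\<in>fib p. fst g q) - fst s p * (\<Sum>q\<in>fib p. snd g q) =
            snd s p * (\<Sum>k\<in>K. fst g (vadd p k)) - fst s p * (\<Sum>k\<in>K. snd g (vadd p k))"
      proof -
        have e1: "sum (fst g) (fib p) = (\<Sum>k\<in>K. fst g (vadd p k))" using R[OF p zg1] by simp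
        have e2: "sum (snd g) (fib p) = (\<Sum>k\<in>K. snd g (vadd p k))" using R[OF p zg2] by simp
        show ?thesis by (simp only: e1 e2)
      qed
    qed
    also have "\<dots> = (\<Sum>p\<in>Ss. \<Sum>k\<in>K. snd s p * fst g (vadd p k) - snd g (vadd p k) * fst s p)"
    proof (rule sum.cong[OF refl])
      fix p
      have "(\<Sum>k\<in>K. snd s p * fst g (vadd p k) - snd g (vadd p k) * fst s p)
          = (\<Sum>k\<in>K. snd s p * fst g (vadd p k)) - (\<Sum>k\<in>K. fst s p * snd g (vadd p k))"
        unfolding sum_subtractf[symmetric] by (rule sum.cong[OF refl]) (simp only: mult.commute)
      then show "snd s p * (\<Sum>k\<in>K. fst g (vadd p k)) - fst s p * (\<Sum>k\<in>K. snd g (vadd p k)) =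
            (\<Sum>k\<in>K. snd s p * fst g (vadd p k) - snd g (vadd p k) * fst s p)"
        unfolding sum_distrib_left by simp
    qed
    finally show ?thesis .
  qed
  also have "\<dots> = (\<Sum>k\<in>K. \<Sum>p\<in>Ss. snd s p * fst g (vadd p k) - snd g (vadd p k) * fst s p)"
    by (rule sum.swap)
  finally have D2: "D = (\<Sum>k\<in>K. \<Sum>p\<in>Ss. snd s p * fst g (vadd p k) - snd g (vadd p k) * fst s p)" .
  have "int N dvd (\<Sum>p\<in>Ss. snd s p * fst g (vadd p k) - snd g (vadd p k) * fst s p)" for k
  proof -
    define h where "h = pshift (- fst k, - snd k) g"
    have fh: "finite (psupp h)" unfolding h_def by (rule fin_pshift[OF fg])
    have F: "finite (psupp s \<union> psupp h)" using fs fh by simp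
    have "pcomm N s h" unfolding h_def by (rule comm)
    then have "psum s h (psupp s \<union> psupp h) mod int N = 0" using pcomm_F[OF F subset_refl] by simp
    moreover have "psum s h (psupp s \<union> psupp h) = (\<Sum>p\<in>psupp s. snd s p * fst h p - snd h p * fst s p)"
      by (rule psum_left_supp[OF F]) simp
    moreover have "fst h p = fst g (vadd p k)" "snd h p = snd g (vadd p k)" for p
      unfolding h_def pshift_def vadd_def by simp_all
    ultimately show ?thesis unfolding Ss_def by (simp add: mod_eq_0_iff_dvd)
  qed
  then have "int N dvd D" unfolding D2 by (simp add: dvd_sum)
  moreover have "(tdot L (wrap L N (snd s)) (wrap L N (fst g)) - tdot L (wrap L N (snd g)) (wrap L N (fst s))) mod int N = D mod int N"
  proof -
    have "(tdot L (wrap L N (snd s)) (wrap L N (fst g)) - tdot L (wrap L N (snd g)) (wrap L N (fst s))) mod int N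
      = (tdot L (wrap L N (snd s)) (wrap L N (fst g)) mod int N - tdot L (wrap L N (snd g)) (wrap L N (fst s)) mod int N) mod int N"
      by (rule mod_diff_eq[symmetric])
    also have "\<dots> = ((\<Sum>p\<in>Ss. snd s p * (\<Sum>q\<in>fib p. fst g q)) mod int N - (\<Sum>p\<in>Ss. fst s p * (\<Sum>q\<in>fib p. snd g q)) mod int N) mod int N"
      unfolding A1 A2 ..
    also have "\<dots> = D mod int N" unfolding D_def by (rule mod_diff_eq)
    finally show ?thesis .
  qed
  ultimately show ?thesis by (simp add: mod_eq_0_iff_dvd[symmetric])
qed


lemma oneD:
  fixes A B u v k L dA dB m :: int
  assumes "A \<le> u" "u < A + dA" "B + k*L \<le> v" "v < B + k*L + dB" "\<bar>u - v\<bar> \<le> m"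
    "-(m+dB) \<le> B - A" "B - A < L - (m+dB)" "dA + dB + 2*m \<le> L" "0 \<le> L"
  shows "k = 0"
proof (rule ccontr)
  assume "k \<noteq> 0"
  then have "k \<ge> 1 \<or> k \<le> -1" by linarith
  then show False
  proof
    assume "k \<ge> 1"
    then have "k * L \<ge> 1 * L" using assms(9) by (intro mult_right_mono) auto
    then show False using assms by linarith
  next
    assume "k \<le> -1"
    then have "k * L \<le> (-1) * L" using assms(9) by (intro mult_right_mono) auto
    then show False using assms by linarith
  qed
qed

definition inbox :: "int \<Rightarrow> int \<Rightarrow> int \<Rightarrow> site \<Rightarrow> bool" where
  "inbox x y d p \<longleftrightarrow> x \<le> fst p \<and> fst p < x + d \<and> y \<le> snd p \<and> snd p < y + d"

definition near :: "int \<Rightarrow> site \<Rightarrow> site \<Rightarrow> bool" where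
  "near m p q \<longleftrightarrow> \<bar>fst p - fst q\<bar> \<le> m \<and> \<bar>snd p - snd q\<bar> \<le> m"

definition compat :: "int \<Rightarrow> int \<Rightarrow> int \<Rightarrow> int \<Rightarrow> int \<Rightarrow> int \<Rightarrow> int \<Rightarrow> int \<Rightarrow> bool" where
  "compat m L x y d x' y' d' \<longleftrightarrow> -(m+d') \<le> x' - x \<and> x' - x < L - (m+d') \<and>
      -(m+d') \<le> y' - y \<and> y' - y < L - (m+d') \<and> d + d' + 2*m \<le> L \<and> 0 \<le> L"

lemma box_lemma:
  assumes c: "compat m L x y d x' y' d'" and q: "inbox x y d q"
    and p: "inbox (x' + kx * L) (y' + ky * L) d' p" and n: "near m q p"
  shows "kx = 0 \<and> ky = 0"
proof
  show "kx = 0"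
    by (rule oneD[of x "fst q" d x' kx L "fst p" d' m]) (use c q p n in \<open>auto simp: compat_def inbox_def near_def\<close>)
  show "ky = 0"
    by (rule oneD[of y "snd q" d y' ky L "snd p" d' m]) (use c q p n in \<open>auto simp: compat_def inbox_def near_def\<close>)
qed

lemma box_lemma2:
  assumes c: "compat m L x y d x' y' d'" and q: "inbox x' y' d' q"
    and p: "inbox (x + kx * L) (y + ky * L) d p" and n: "near m q p"
  shows "kx = 0 \<and> ky = 0"
proof -
  let ?p = "(fst p - kx * L, snd p - ky * L)" and ?q = "(fst q - kx * L, snd q - ky * L)"
  have "inbox x y d ?p" using p unfolding inbox_def by auto
  moreover have "inbox (x' + (- kx) * L) (y' + (- ky) * L) d' ?q" using q unfolding inbox_def by auto
  moreover have "near m ?p ?q" using n unfolding near_def by auto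
  ultimately have "- kx = 0 \<and> - ky = 0" using box_lemma[OF c] by blast
  then show ?thesis by simp
qed

definition TI :: "nat \<Rightarrow> int \<Rightarrow> int \<Rightarrow> nat \<Rightarrow> site set" where
  "TI L x0 y0 d = {((x0 + i) mod int L, (y0 + j) mod int L) | i j. 0 \<le> i \<and> i < int d \<and> 0 \<le> j \<and> j < int d}"

lemma TI_inv:
  assumes "tr L p \<in> TI L x0 y0 d"
  shows "\<exists>kx ky. inbox (x0 + kx * int L) (y0 + ky * int L) (int d) p"
proof -
  obtain i j where ij: "0 \<le> i" "i < int d" "0 \<le> j" "j < int d"
    "(x0 + i) mod int L = fst p mod int L" "(y0 + j) mod int L = snd p mod int L"
    using assms unfolding TI_def tr_def by auto
  have "int L dvd fst p - (x0 + i)" using ij(5) by (metis mod_eq_dvd_iff)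
  then obtain kx where kx: "fst p - (x0 + i) = int L * kx" by (auto elim: dvdE)
  have "int L dvd snd p - (y0 + j)" using ij(6) by (metis mod_eq_dvd_iff)
  then obtain ky where ky: "snd p - (y0 + j) = int L * ky" by (auto elim: dvdE)
  have "inbox (x0 + kx * int L) (y0 + ky * int L) (int d) p"
    unfolding inbox_def using ij kx ky by (simp add: algebra_simps)
  then show ?thesis by blast
qed

lemma TI_surj:
  assumes "t \<in> TI L x0 y0 d"
  shows "\<exists>p. inbox x0 y0 (int d) p \<and> tr L p = t"
proof -
  obtain i j where ij: "0 \<le> i" "i < int d" "0 \<le> j" "j < int d"
    "t = ((x0 + i) mod int L, (y0 + j) mod int L)"
    using assms unfolding TI_def by auto
  then have "inbox x0 y0 (int d) (x0 + i, y0 + j) \<and> tr L (x0 + i, y0 + j) = t"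
    unfolding inbox_def tr_def by simp
  then show ?thesis by blast
qed

lemma TI_cong:
  assumes "x0 mod int L = x0' mod int L" "y0 mod int L = y0' mod int L"
  shows "TI L x0 y0 d = TI L x0' y0' d"
proof -
  have "(x0 + i) mod int L = (x0' + i) mod int L" for i
    using assms(1) by (metis mod_add_left_eq)
  moreover have "(y0 + j) mod int L = (y0' + j) mod int L" for j
    using assms(2) by (metis mod_add_left_eq)
  ultimately show ?thesis unfolding TI_def by simp
qed


locale geo =
  fixes L N lS :: nat and x1 y1 x2 y2 :: int and d1 d2 :: nat and a1 b1 a2 b2 :: pvec
  assumes N: "N > 0" and L: "L > 0"
    and D1: "2 * (int d1 + int lS) < int L" and D2: "2 * (int d2 + int lS) < int L"
    and c12: "compat (int lS) (int L) x1 y1 (int d1) x2 y2 (int d2)"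
    and t1: "a1 \<in> tvecs L N" "b1 \<in> tvecs L N" and t2: "a2 \<in> tvecs L N" "b2 \<in> tvecs L N"
    and s1: "tsupp a1 b1 \<subseteq> TI L x1 y1 d1" and s2: "tsupp a2 b2 \<subseteq> TI L x2 y2 d2"
begin

definition in1 where "in1 p = inbox x1 y1 (int d1) p"
definition in2 where "in2 p = inbox x2 y2 (int d2) p"

lemma c11: "compat (int lS) (int L) x1 y1 (int d1) x1 y1 (int d1)"
  unfolding compat_def using D1 by simp
lemma c22: "compat (int lS) (int L) x2 y2 (int d2) x2 y2 (int d2)"
  unfolding compat_def using D2 by simp

lemma kz1:
  assumes q: "in1 q \<or> in2 q" and p: "inbox (x1 + kx * int L) (y1 + ky * int L) (int d1) p"
    and n: "near (int lS) q p"
  shows "kx = 0 \<and> ky = 0"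
  using q
proof
  assume "in1 q" then show ?thesis using box_lemma[OF c11 _ p n] unfolding in1_def by blast
next
  assume "in2 q" then show ?thesis using box_lemma2[OF c12 _ p n] unfolding in2_def by blast
qed

lemma kz2:
  assumes q: "in1 q \<or> in2 q" and p: "inbox (x2 + kx * int L) (y2 + ky * int L) (int d2) p"
    and n: "near (int lS) q p"
  shows "kx = 0 \<and> ky = 0"
  using q
proof
  assume "in1 q" then show ?thesis using box_lemma[OF c12 _ p n] unfolding in1_def by blast
next
  assume "in2 q" then show ?thesis using box_lemma[OF c22 _ p n] unfolding in2_def by blast
qed

lemma C1a:
  assumes q: "in1 q \<or> in2 q" and n: "near (int lS) q p" and t: "tr L p \<in> TI L x1 y1 d1"
  shows "in1 p"
proof -
  obtain kx ky where k: "inbox (x1 + kx * int L) (y1 + ky * int L) (int d1) p" using TI_inv[OF t] by blast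
  then have "kx = 0 \<and> ky = 0" using kz1[OF q k n] by blast
  then show ?thesis using k unfolding in1_def by simp
qed

lemma C1b:
  assumes q: "in1 q \<or> in2 q" and n: "near (int lS) q p" and t: "tr L p \<in> TI L x2 y2 d2"
  shows "in2 p"
proof -
  obtain kx ky where k: "inbox (x2 + kx * int L) (y2 + ky * int L) (int d2) p" using TI_inv[OF t] by blast
  then have "kx = 0 \<and> ky = 0" using kz2[OF q k n] by blast
  then show ?thesis using k unfolding in2_def by simp
qed

lemma in_TI1: "in1 p \<Longrightarrow> tr L p \<in> TI L x1 y1 d1"
proof -
  assume "in1 p"
  then have "0 \<le> fst p - x1 \<and> fst p - x1 < int d1 \<and> 0 \<le> snd p - y1 \<and> snd p - y1 < int d1"
    unfolding in1_def inbox_def by auto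
  moreover have "tr L p = ((x1 + (fst p - x1)) mod int L, (y1 + (snd p - y1)) mod int L)"
    unfolding tr_def by simp
  ultimately show ?thesis unfolding TI_def by blast
qed

lemma in_TI2: "in2 p \<Longrightarrow> tr L p \<in> TI L x2 y2 d2"
proof -
  assume "in2 p"
  then have "0 \<le> fst p - x2 \<and> fst p - x2 < int d2 \<and> 0 \<le> snd p - y2 \<and> snd p - y2 < int d2"
    unfolding in2_def inbox_def by auto
  moreover have "tr L p = ((x2 + (fst p - x2)) mod int L, (y2 + (snd p - y2)) mod int L)"
    unfolding tr_def by simp
  ultimately show ?thesis unfolding TI_def by blast
qed

lemma near_refl: "near m p p \<longleftrightarrow> 0 \<le> m" unfolding near_def by simp

lemma C2:
  assumes p: "in1 p \<or> in2 p" and p': "in1 p' \<or> in2 p'" and t: "tr L p = tr L p'"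
  shows "p = p'"
proof -
  have n: "near (int lS) p' p'" by (simp add: near_refl)
  have "int L dvd fst p' - fst p" using t unfolding tr_def by (simp add: mod_eq_dvd_iff dvd_diff_commute)
  then obtain kx where kx: "fst p' - fst p = int L * kx" by (auto elim: dvdE)
  have "int L dvd snd p' - snd p" using t unfolding tr_def by (simp add: mod_eq_dvd_iff dvd_diff_commute)
  then obtain ky where ky: "snd p' - snd p = int L * ky" by (auto elim: dvdE)
  have "kx = 0 \<and> ky = 0"
    using p
  proof
    assume "in1 p"
    then have "inbox (x1 + kx * int L) (y1 + ky * int L) (int d1) p'"
      using kx ky unfolding in1_def inbox_def by (simp add: algebra_simps)
    then show ?thesis using kz1[OF p' _ n] by blast
  next
    assume "in2 p"
    then have "inbox (x2 + kx * int L) (y2 + ky * int L) (int d2) p'"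
      using kx ky unfolding in2_def inbox_def by (simp add: algebra_simps)
    then show ?thesis using kz2[OF p' _ n] by blast
  qed
  then show ?thesis using kx ky by (simp add: prod_eq_iff)
qed

end


lemma tvecs_off: "a \<in> tvecs L N \<Longrightarrow> s \<notin> torus_sites L \<Longrightarrow> a s = 0"
  unfolding tvecs_def by (cases s) auto

context geo begin

definition ea :: pvec where
  "ea p = ((if in1 p then a1 (tr L p) else 0) - (if in2 p then a2 (tr L p) else 0)) mod int N"
definition eb :: pvec where
  "eb p = ((if in1 p then b1 (tr L p) else 0) - (if in2 p then b2 (tr L p) else 0)) mod int N"

definition Fb where "Fb = {p. in1 p \<or> in2 p}"

lemma fin_Fb: "finite Fb"
proof -
  have "Fb \<subseteq> ({x1..<x1 + int d1} \<times> {y1..<y1 + int d1}) \<union> ({x2..<x2 + int d2} \<times> {y2..<y2 + int d2})"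
    unfolding Fb_def in1_def in2_def inbox_def by auto
  then show ?thesis by (rule finite_subset) simp
qed

lemma supp_e: "psupp (ea, eb) \<subseteq> Fb"
  unfolding psupp_def Fb_def ea_def eb_def by auto

lemma e_pvecs: "(ea, eb) \<in> pvecs N"
  unfolding pvecs_def using finite_subset[OF supp_e fin_Fb] N by (simp add: ea_def eb_def)

lemma a1_zero_off: "\<not> in1 p \<Longrightarrow> (in1 q \<or> in2 q) \<Longrightarrow> near (int lS) q p \<Longrightarrow> a1 (tr L p) = 0 \<and> b1 (tr L p) = 0"
  using C1a s1 unfolding tsupp_def by blast

lemma a2_zero_off: "\<not> in2 p \<Longrightarrow> (in1 q \<or> in2 q) \<Longrightarrow> near (int lS) q p \<Longrightarrow> a2 (tr L p) = 0 \<and> b2 (tr L p) = 0"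
  using C1b s2 unfolding tsupp_def by blast

lemma E2:
  assumes q: "in1 q \<or> in2 q" and n: "near (int lS) q p"
  shows "ea p = (a1 (tr L p) - a2 (tr L p)) mod int N \<and> eb p = (b1 (tr L p) - b2 (tr L p)) mod int N"
proof -
  have i1: "(if in1 p then a1 (tr L p) else 0) = a1 (tr L p) \<and> (if in1 p then b1 (tr L p) else 0) = b1 (tr L p)"
  proof (cases "in1 p")
    case False then show ?thesis using a1_zero_off[OF False q n] by simp
  qed simp
  have i2: "(if in2 p then a2 (tr L p) else 0) = a2 (tr L p) \<and> (if in2 p then b2 (tr L p) else 0) = b2 (tr L p)"
  proof (cases "in2 p")
    case False then show ?thesis using a2_zero_off[OF False q n] by simp
  qed simp
  show ?thesis unfolding ea_def eb_def using i1 i2 by simp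
qed

lemma E2_off: "\<not> (in1 p \<or> in2 p) \<Longrightarrow> ea p = 0 \<and> eb p = 0"
  unfolding ea_def eb_def by simp

lemma E3:
  assumes t: "t \<in> torus_sites L"
  shows "wrap L N ea t = (a1 t - a2 t) mod int N \<and> wrap L N eb t = (b1 t - b2 t) mod int N"
proof -
  have sa: "{p. ea p \<noteq> 0} \<subseteq> Fb" and sb: "{p. eb p \<noteq> 0} \<subseteq> Fb" using supp_e unfolding psupp_def by auto
  have wa: "wrap L N ea t = (\<Sum>p\<in>{p\<in>Fb. tr L p = t}. ea p) mod int N" by (rule wrap_fiber[OF t fin_Fb sa])
  have wb: "wrap L N eb t = (\<Sum>p\<in>{p\<in>Fb. tr L p = t}. eb p) mod int N" by (rule wrap_fiber[OF t fin_Fb sb])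
  show ?thesis
  proof (cases "\<exists>p\<in>Fb. tr L p = t")
    case True
    then obtain p where p: "p \<in> Fb" "tr L p = t" by blast
    have pin: "in1 p \<or> in2 p" using p(1) unfolding Fb_def by simp
    have fib: "{p\<in>Fb. tr L p = t} = {p}"
    proof (intro equalityI subsetI)
      fix x assume x: "x \<in> {p\<in>Fb. tr L p = t}"
      then have xi: "in1 x \<or> in2 x" unfolding Fb_def by simp
      have "tr L x = tr L p" using x p(2) by simp
      then have "x = p" by (rule C2[OF xi pin])
      then show "x \<in> {p}" by simp
    next
      fix x assume "x \<in> {p}" then show "x \<in> {p\<in>Fb. tr L p = t}" using p by simp
    qed
    have z1: "a1 t = 0 \<and> b1 t = 0" if "\<not> in1 p"
    proof (rule ccontr)
      assume "\<not> (a1 t = 0 \<and> b1 t = 0)"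
      then have "t \<in> TI L x1 y1 d1" using s1 unfolding tsupp_def by auto
      then obtain p'' where p'': "inbox x1 y1 (int d1) p''" "tr L p'' = t" using TI_surj by blast
      then have "p'' = p" using C2[OF _ pin] p(2) unfolding in1_def by simp
      then show False using that p''(1) unfolding in1_def by simp
    qed
    have z2: "a2 t = 0 \<and> b2 t = 0" if "\<not> in2 p"
    proof (rule ccontr)
      assume "\<not> (a2 t = 0 \<and> b2 t = 0)"
      then have "t \<in> TI L x2 y2 d2" using s2 unfolding tsupp_def by auto
      then obtain p'' where p'': "inbox x2 y2 (int d2) p''" "tr L p'' = t" using TI_surj by blast
      then have "p'' = p" using C2[OF _ pin] p(2) unfolding in2_def by simp
      then show False using that p''(1) unfolding in2_def by simp
    qed
    have "ea p = (a1 t - a2 t) mod int N \<and> eb p = (b1 t - b2 t) mod int N"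
      unfolding ea_def eb_def using z1 z2 p(2) by auto
    then show ?thesis unfolding wa wb fib by simp
  next
    case False
    then have fib: "{p\<in>Fb. tr L p = t} = {}" by auto
    have "a1 t = 0 \<and> b1 t = 0"
    proof (rule ccontr)
      assume "\<not> (a1 t = 0 \<and> b1 t = 0)"
      then have "t \<in> TI L x1 y1 d1" using s1 unfolding tsupp_def by auto
      then obtain p'' where p'': "inbox x1 y1 (int d1) p''" "tr L p'' = t" using TI_surj by blast
      have "p'' \<in> Fb" unfolding Fb_def in1_def using p''(1) by simp
      then show False using False p''(2) by blast
    qed
    moreover have "a2 t = 0 \<and> b2 t = 0"
    proof (rule ccontr)
      assume "\<not> (a2 t = 0 \<and> b2 t = 0)"
      then have "t \<in> TI L x2 y2 d2" using s2 unfolding tsupp_def by auto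
      then obtain p'' where p'': "inbox x2 y2 (int d2) p''" "tr L p'' = t" using TI_surj by blast
      have "p'' \<in> Fb" unfolding Fb_def in2_def using p''(1) by simp
      then show False using False p''(2) by blast
    qed
    ultimately show ?thesis unfolding wa wb fib by simp
  qed
qed

lemma E3':
  "wrap L N ea = tadd N a1 (tneg N a2) \<and> wrap L N eb = tadd N b1 (tneg N b2)"
proof -
  have m: "(x + (- y) mod int N) mod int N = (x - y) mod int N" for x y by (rule m1)
  have "wrap L N ea t = tadd N a1 (tneg N a2) t \<and> wrap L N eb t = tadd N b1 (tneg N b2) t" for t
  proof (cases "t \<in> torus_sites L")
    case True then show ?thesis using E3 unfolding tadd_def tneg_def m by simp
  next
    case False
    then have "a1 t = 0" "a2 t = 0" "b1 t = 0" "b2 t = 0" using tvecs_off t1 t2 by auto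
    then show ?thesis using False unfolding wrap_def tadd_def tneg_def by simp
  qed
  then show ?thesis by (simp add: fun_eq_iff)
qed

end


context geo begin

lemma tadd_tneg: "tadd N a1 (tneg N a2) t = (a1 t - a2 t) mod int N"
  "tadd N b1 (tneg N b2) t = (b1 t - b2 t) mod int N"
  unfolding tadd_def tneg_def by (simp_all add: m1)

lemma pc:
  assumes s: "s \<in> pvecs N" and ls: "plane_linsize_lt (psupp s) (real lS)"
    and dv: "int N dvd tdot L (tadd N b1 (tneg N b2)) (wrap L N (fst s)) - tdot L (wrap L N (snd s)) (tadd N a1 (tneg N a2))"
  shows "pcomm N s (ea, eb)"
proof -
  define Ss where "Ss = psupp s"
  define a where "a = tadd N a1 (tneg N a2)"
  define b where "b = tadd N b1 (tneg N b2)"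
  have fSs: "finite Ss" unfolding Ss_def using s pvecs_fin by blast
  have ss1: "{p. fst s p \<noteq> 0} \<subseteq> Ss" and ss2: "{p. snd s p \<noteq> 0} \<subseteq> Ss"
    unfolding Ss_def psupp_def by auto
  have w1: "tdot L b (wrap L N (fst s)) mod int N = (\<Sum>p\<in>Ss. fst s p * b (tr L p)) mod int N"
    by (rule wrap1'[OF L fSs ss1])
  have w2: "tdot L (wrap L N (snd s)) a mod int N = (\<Sum>p\<in>Ss. snd s p * a (tr L p)) mod int N"
    by (rule wrap1[OF L fSs ss2])
  define T where "T = (\<Sum>p\<in>Ss. fst s p * b (tr L p)) - (\<Sum>p\<in>Ss. snd s p * a (tr L p))"
  have "(tdot L b (wrap L N (fst s)) - tdot L (wrap L N (snd s)) a) mod int N = T mod int N"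
  proof -
    have "(tdot L b (wrap L N (fst s)) - tdot L (wrap L N (snd s)) a) mod int N
       = (tdot L b (wrap L N (fst s)) mod int N - tdot L (wrap L N (snd s)) a mod int N) mod int N"
      by (rule mod_diff_eq[symmetric])
    also have "\<dots> = ((\<Sum>p\<in>Ss. fst s p * b (tr L p)) mod int N - (\<Sum>p\<in>Ss. snd s p * a (tr L p)) mod int N) mod int N"
      unfolding w1 w2 ..
    also have "\<dots> = T mod int N" unfolding T_def by (rule mod_diff_eq)
    finally show ?thesis .
  qed
  then have dT: "int N dvd T" using dv unfolding a_def b_def by (simp add: mod_eq_0_iff_dvd[symmetric])
  have fe: "finite (psupp (ea, eb))" using finite_subset[OF supp_e fin_Fb] .
  have F: "finite (psupp s \<union> psupp (ea, eb))" using fSs fe unfolding Ss_def by simp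
  have ps: "psum s (ea, eb) (psupp s \<union> psupp (ea, eb)) = (\<Sum>p\<in>Ss. snd s p * ea p - eb p * fst s p)"
    unfolding Ss_def by (subst psum_left_supp[OF F]) auto
  have "int N dvd (\<Sum>p\<in>Ss. snd s p * ea p - eb p * fst s p)"
  proof (cases "\<exists>q\<in>Ss. in1 q \<or> in2 q")
    case True
    then obtain q where q: "q \<in> Ss" "in1 q \<or> in2 q" by blast
    obtain x0 y0 and d :: nat where d: "real d < real lS" "psupp s \<subseteq> {x0..<x0 + int d} \<times> {y0..<y0 + int d}"
      using ls unfolding plane_linsize_lt_def by blast
    have dl: "int d \<le> int lS" using d(1) by simp
    have nr: "near (int lS) q p" if "p \<in> Ss" for p
    proof -
      have "q \<in> {x0..<x0 + int d} \<times> {y0..<y0 + int d}" using d(2) q(1) unfolding Ss_def by blast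
      moreover have "p \<in> {x0..<x0 + int d} \<times> {y0..<y0 + int d}" using d(2) that unfolding Ss_def by blast
      ultimately show ?thesis unfolding near_def using dl by (auto simp: mem_Times_iff)
    qed
    have "(\<Sum>p\<in>Ss. snd s p * ea p - eb p * fst s p) = (\<Sum>p\<in>Ss. snd s p * a (tr L p) - b (tr L p) * fst s p)"
    proof (rule sum.cong[OF refl])
      fix p assume "p \<in> Ss"
      then have "ea p = a (tr L p) \<and> eb p = b (tr L p)"
        using E2[OF q(2) nr] tadd_tneg unfolding a_def b_def by simp
      then show "snd s p * ea p - eb p * fst s p = snd s p * a (tr L p) - b (tr L p) * fst s p" by simp
    qed
    also have "\<dots> = - T" unfolding T_def by (simp add: sum_subtractf mult.commute)
    finally show ?thesis using dT by simp
  next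
    case False
    then have "(\<Sum>p\<in>Ss. snd s p * ea p - eb p * fst s p) = 0"
      using E2_off by (intro sum.neutral) auto
    then show ?thesis by simp
  qed
  then show ?thesis using pcomm_F[OF F subset_refl] ps by (simp add: mod_eq_0_iff_dvd)
qed

end


lemma smult_0: "smult_op 0 A = (\<lambda>_ _. 0)" unfolding smult_op_def by simp

lemma caseA:
  assumes P: "is_proj_onto L N P (code_space L N T)" and A: "A \<in> T" "adj_op A \<in> T"
    and c: "mult_op L N E A = smult_op w (mult_op L N A E)" and w: "w \<noteq> 1"
  shows "mult_op L N (mult_op L N P E) P = (\<lambda>_ _. 0)"
proof -
  let ?X = "mult_op L N (mult_op L N P E) P"
  have AP: "mult_op L N A P = P" by (rule BP[OF P A(1)])
  have PA: "mult_op L N P A = P" by (rule PB[OF P A(2)])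
  have "?X = mult_op L N (mult_op L N P E) (mult_op L N A P)" unfolding AP ..
  also have "\<dots> = mult_op L N (mult_op L N P (mult_op L N E A)) P"
    by (simp only: mult_assoc)
  also have "\<dots> = smult_op w (mult_op L N (mult_op L N (mult_op L N P A) E) P)"
    unfolding c smult_mult_left smult_mult_right by (simp only: mult_assoc)
  also have "\<dots> = smult_op w ?X" unfolding PA ..
  finally have eq: "?X = smult_op w ?X" .
  show ?thesis
  proof (rule ext, rule ext)
    fix x y
    have "?X x y = w * ?X x y" using fun_cong[OF fun_cong[OF eq, of x], of y] unfolding smult_op_def .
    then have "(1 - w) * ?X x y = 0" by (simp add: algebra_simps)
    then show "?X x y = 0" using w by simp
  qed
qed

lemma caseB:
  assumes P: "is_proj_onto L N P (code_space L N T)" and TS: "T \<subseteq> S"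
    and Sp: "S \<subseteq> torus_paulis L N"
    and comm: "\<And>B. B \<in> S \<Longrightarrow> mult_op L N B Gop = mult_op L N Gop B"
  shows "mult_op L N (mult_op L N P (smult_op c Gop)) P = smult_op c (mult_op L N Gop P)"
proof -
  let ?Y = "mult_op L N Gop P"
  have "mult_op L N P ?Y = ?Y"
  proof (rule fix_cols[OF P])
    fix \<beta> \<alpha> assume "\<beta> \<notin> confs L N \<or> \<alpha> \<notin> confs L N"
    then show "?Y \<beta> \<alpha> = 0" unfolding mult_op_def by auto
  next
    fix B \<beta> \<alpha> assume "B \<in> T" "\<beta> \<notin> confs L N"
    then show "B \<beta> \<alpha> = 0" using pauli_row TS Sp by blast
  next
    fix B assume B: "B \<in> T"
    have "mult_op L N B ?Y = mult_op L N (mult_op L N B Gop) P" by (simp only: mult_assoc)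
    also have "\<dots> = mult_op L N Gop (mult_op L N B P)" using comm B TS by (simp add: mult_assoc subset_iff)
    also have "\<dots> = ?Y" using BP[OF P B] by simp
    finally show "mult_op L N B ?Y = ?Y" .
  qed
  then show ?thesis unfolding smult_mult_left smult_mult_right by (simp only: mult_assoc)
qed

lemma comm_dvd:
  assumes N: "N > 0" and t: "a \<in> tvecs L N" "a' \<in> tvecs L N"
    and eq: "mult_op L N (W L N a b) (W L N a' b') = mult_op L N (W L N a' b') (W L N a b)"
  shows "int N dvd tdot L b a' - tdot L b' a"
proof -
  let ?w = "om N (tdot L b a' - tdot L b' a)"
  let ?R = "mult_op L N (W L N a' b') (W L N a b)"
  have e2: "?R = smult_op ?w ?R" using eq W_comm[OF N, of L a b a' b'] by simp
  let ?v = "tadd N a' a"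
  have v: "?v \<in> tvecs L N" using tadd_tvecs[OF N t(2) t(1)] .
  have R: "?R = smult_op (om N (tdot L b' a)) (W L N ?v (tadd N b' b))" by (rule W_mult[OF N])
  have "?R ?v (\<lambda>_. 0) \<noteq> 0" unfolding R smult_op_def using W_nonzero[OF N v] by simp
  moreover have "?R ?v (\<lambda>_. 0) = ?w * ?R ?v (\<lambda>_. 0)"
    using fun_cong[OF fun_cong[OF e2, of ?v], of "\<lambda>_. 0"] unfolding smult_op_def .
  ultimately have "?w = 1" by simp
  then show ?thesis by (rule om_1_dvd[OF N])
qed

lemma dvd_comm:
  assumes N: "N > 0" and d: "int N dvd tdot L b a' - tdot L b' a"
  shows "mult_op L N (W L N a b) (W L N a' b') = mult_op L N (W L N a' b') (W L N a b)"
proof -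
  have "(tdot L b a' - tdot L b' a) mod int N = 0 mod int N" using d by simp
  then have "om N (tdot L b a' - tdot L b' a) = om N 0" by (rule om_cong)
  then show ?thesis using W_comm[OF N, of L a b a' b'] by simp
qed


lemma center_sub: "plane_center N G \<subseteq> G" unfolding plane_center_def by auto

lemma Ws_center:
  assumes N: "N > 0" and L: "L > 0" and code: "ti_topo_subsys_code N lG lS G"
    and s: "s \<in> plane_center N G"
  shows "W L N (wrap L N (fst s)) (wrap L N (snd s)) \<in> op_center L N (gauge_ops L N G)"
proof -
  have sub: "plane_subgroup N G" and ti: "\<And>u g. g \<in> G \<Longrightarrow> pshift u g \<in> G"
    using code unfolding ti_topo_subsys_code_def by auto
  have GP: "G \<subseteq> pvecs N" using sub unfolding plane_subgroup_def by simp
  have sG: "s \<in> G" using s center_sub by blast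
  have fs: "finite (psupp s)" using sG GP pvecs_fin by blast
  let ?Ws = "W L N (wrap L N (fst s)) (wrap L N (snd s))"
  have "?Ws \<in> gauge_ops L N G" unfolding gauge_ops_def
    by (rule CollectI, rule exI[of _ 1], rule exI[of _ s]) (simp add: sG)
  moreover have "mult_op L N ?Ws K = mult_op L N K ?Ws" if K: "K \<in> gauge_ops L N G" for K
  proof -
    obtain c g where cg: "K = smult_op c (W L N (wrap L N (fst g)) (wrap L N (snd g)))" "g \<in> G"
      using K unfolding gauge_ops_def by blast
    have fg: "finite (psupp g)" using cg(2) GP pvecs_fin by blast
    have "pcomm N s (pshift u g)" for u
      using s ti[OF cg(2)] unfolding plane_center_def by blast
    then have "int N dvd tdot L (wrap L N (snd s)) (wrap L N (fst g)) - tdot L (wrap L N (snd g)) (wrap L N (fst s))"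
      by (rule wrap2[OF L N fs fg])
    then have "mult_op L N ?Ws (W L N (wrap L N (fst g)) (wrap L N (snd g))) =
               mult_op L N (W L N (wrap L N (fst g)) (wrap L N (snd g))) ?Ws"
      by (rule dvd_comm[OF N])
    then show ?thesis unfolding cg(1) smult_mult_left smult_mult_right by simp
  qed
  ultimately show ?thesis unfolding op_center_def by blast
qed

lemma wrap_supp_TI:
  assumes L: "L > 0" and fs: "finite (psupp s)"
    and box: "psupp s \<subseteq> {x0..<x0 + int d} \<times> {y0..<y0 + int d}"
  shows "tsupp (wrap L N (fst s)) (wrap L N (snd s)) \<subseteq> TI L x0 y0 d"
proof
  fix t assume t: "t \<in> tsupp (wrap L N (fst s)) (wrap L N (snd s))"
  then have tt: "t \<in> torus_sites L" unfolding tsupp_def wrap_def by (auto split: if_splits)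
  have s1: "{p. fst s p \<noteq> 0} \<subseteq> psupp s" and s2: "{p. snd s p \<noteq> 0} \<subseteq> psupp s" unfolding psupp_def by auto
  have "{p\<in>psupp s. tr L p = t} \<noteq> {}"
  proof
    assume e: "{p\<in>psupp s. tr L p = t} = {}"
    have "wrap L N (fst s) t = 0" unfolding wrap_fiber[OF tt fs s1] e by simp
    moreover have "wrap L N (snd s) t = 0" unfolding wrap_fiber[OF tt fs s2] e by simp
    ultimately show False using t unfolding tsupp_def by simp
  qed
  then obtain p where p: "p \<in> psupp s" "tr L p = t" by blast
  then have "p \<in> {x0..<x0 + int d} \<times> {y0..<y0 + int d}" using box by blast
  then have "0 \<le> fst p - x0 \<and> fst p - x0 < int d \<and> 0 \<le> snd p - y0 \<and> snd p - y0 < int d"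
    by (auto simp: mem_Times_iff)
  moreover have "t = ((x0 + (fst p - x0)) mod int L, (y0 + (snd p - y0)) mod int L)"
    using p(2) unfolding tr_def by simp
  ultimately show "t \<in> TI L x0 y0 d" unfolding TI_def by blast
qed

lemma local_op:
  assumes N: "N > 0" and L: "L > 0" and fs: "finite (psupp s)" and c: "cmod c = 1"
    and ls: "plane_linsize_lt (psupp s) (real lS)"
  shows "op_linsize_lt L N (smult_op c (W L N (wrap L N (fst s)) (wrap L N (snd s)))) (real lS)"
proof -
  obtain x0 y0 and d :: nat where d: "real d < real lS" "psupp s \<subseteq> {x0..<x0 + int d} \<times> {y0..<y0 + int d}"
    using ls unfolding plane_linsize_lt_def by blast
  have "tsupp (wrap L N (fst s)) (wrap L N (snd s)) \<subseteq> TI L x0 y0 d" by (rule wrap_supp_TI[OF L fs d(2)])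
  then have "torus_linsize_lt L (tsupp (wrap L N (fst s)) (wrap L N (snd s))) (real lS)"
    unfolding torus_linsize_lt_def TI_def using d(1) by blast
  then show ?thesis unfolding op_linsize_lt_def using c wrap_tvecs[OF N] by blast
qed


lemma small_rep:
  assumes "E \<in> small_errors L N lS"
  shows "\<exists>c a b x0 y0 d. cmod c = 1 \<and> a \<in> tvecs L N \<and> b \<in> tvecs L N \<and> E = smult_op c (W L N a b) \<and>
     tsupp a b \<subseteq> TI L x0 y0 d \<and> 2 * (int d + int lS) < int L"
proof -
  obtain c a b where cab: "cmod c = 1" "a \<in> tvecs L N" "b \<in> tvecs L N" "E = smult_op c (W L N a b)"
    "torus_linsize_lt L (tsupp a b) (real L / 2 - real lS)"
    using assms unfolding small_errors_def op_linsize_lt_def by blast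
  obtain x0 y0 and d :: nat where d: "real d < real L / 2 - real lS" "tsupp a b \<subseteq> TI L x0 y0 d"
    using cab(5) unfolding torus_linsize_lt_def TI_def by blast
  have "real (2 * (d + lS)) < real L" using d(1) by simp
  then have "2 * (d + lS) < L" by (simp only: of_nat_less_iff)
  then have "2 * (int d + int lS) < int L" by presburger
  then show ?thesis using cab d by blast
qed

lemma compat_mk:
  assumes "0 \<le> rx" "rx < int L" "0 \<le> ry" "ry < int L"
    "2 * (int d1 + int lS) < int L" "2 * (int d2 + int lS) < int L"
  shows "compat (int lS) (int L) x1 y1 (int d1) (x1 - (int lS + int d2) + rx) (y1 - (int lS + int d2) + ry) (int d2)"
proof -
  have ex: "x1 - (int lS + int d2) + rx - x1 = rx - (int lS + int d2)" by simp
  have ey: "y1 - (int lS + int d2) + ry - y1 = ry - (int lS + int d2)" by simp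
  have "2 * (int d1 + int lS) + 2 * (int d2 + int lS) < int L + int L"
    using assms(5,6) by (rule add_strict_mono)
  then have "2 * (int d1 + int d2 + 2 * int lS) < 2 * int L" by (simp add: algebra_simps)
  then have s: "int d1 + int d2 + 2 * int lS < int L" by simp
  show ?thesis unfolding compat_def ex ey using assms(1-4) s by simp
qed

theorem mainTheorem2:
  fixes N L lG lS :: nat and G :: "(pvec \<times> pvec) set" and S :: "op set"
    and P E1 E2 :: op
  assumes "2 \<le> N"
    and "ti_topo_subsys_code N lG lS G"
    and "torus_stabilizer_group L N G S"
    and "is_proj_onto L N P (code_space L N (local_stab L N lS S))"
    and "E1 \<in> small_errors L N lS" and "E2 \<in> small_errors L N lS"
  shows "\<exists>Gop\<in>gauge_ops L N G. \<exists>c::complex.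
           mult_op L N (mult_op L N P (mult_op L N E1 (adj_op E2))) P = smult_op c (mult_op L N Gop P)"
proof -
  have N: "N > 0" using assms(1) by simp
  note code = assms(2)
  note P = assms(4)
  define T where "T = local_stab L N lS S"
  define Xl where "Xl = {A\<in>S. op_linsize_lt L N A (real lS)}"
  have Tdef: "T = op_group_gen L N Xl" unfolding T_def Xl_def local_stab_def ..
  have stab: "S \<subseteq> torus_paulis L N" "op_group L N S" "prop_sets (op_center L N (gauge_ops L N G)) S"
    using assms(3) unfolding torus_stabilizer_group_def by auto
  have TS: "T \<subseteq> S" unfolding Tdef by (rule gen_sub[OF stab(2)]) (auto simp: Xl_def)
  have XT: "Xl \<subseteq> T" unfolding Tdef by (rule gen_base)
  obtain c1 a1 b1 x1 y1 d1 where e1: "cmod c1 = 1" "a1 \<in> tvecs L N" "b1 \<in> tvecs L N"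
      "E1 = smult_op c1 (W L N a1 b1)" "tsupp a1 b1 \<subseteq> TI L x1 y1 d1" "2 * (int d1 + int lS) < int L"
    using small_rep[OF assms(5)] by blast
  obtain c2 a2 b2 x2 y2 d2 where e2: "cmod c2 = 1" "a2 \<in> tvecs L N" "b2 \<in> tvecs L N"
      "E2 = smult_op c2 (W L N a2 b2)" "tsupp a2 b2 \<subseteq> TI L x2 y2 d2" "2 * (int d2 + int lS) < int L"
    using small_rep[OF assms(6)] by blast
  have L: "L > 0" using e1(6) by simp
  define cx where "cx = x1 - (int lS + int d2)"
  define cy where "cy = y1 - (int lS + int d2)"
  define x2' where "x2' = cx + (x2 - cx) mod int L"
  define y2' where "y2' = cy + (y2 - cy) mod int L"
  have "x2' mod int L = (cx + (x2 - cx)) mod int L" unfolding x2'_def by (rule mod_add_right_eq)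
  then have "x2' mod int L = x2 mod int L" by simp
  moreover have "y2' mod int L = (cy + (y2 - cy)) mod int L" unfolding y2'_def by (rule mod_add_right_eq)
  then have "y2' mod int L = y2 mod int L" by simp
  ultimately have "TI L x2' y2' d2 = TI L x2 y2 d2" by (rule TI_cong)
  then have TIeq: "TI L x2 y2 d2 = TI L x2' y2' d2" by simp
  have "0 \<le> (x2 - cx) mod int L" "(x2 - cx) mod int L < int L"
       "0 \<le> (y2 - cy) mod int L" "(y2 - cy) mod int L < int L" using L by simp_all
  then have c12: "compat (int lS) (int L) x1 y1 (int d1) x2' y2' (int d2)"
    unfolding x2'_def y2'_def cx_def cy_def using e1(6) e2(6) by (intro compat_mk)
  interpret g: geo L N lS x1 y1 x2' y2' d1 d2 a1 b1 a2 b2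
    by unfold_locales (use N L e1 e2 c12 TIeq in simp_all)
  define a where "a = tadd N a1 (tneg N a2)"
  define b where "b = tadd N b1 (tneg N b2)"
  have ab: "a \<in> tvecs L N" "b \<in> tvecs L N" unfolding a_def b_def
    using tadd_tvecs[OF N] tneg_tvecs[OF N] e1 e2 by blast+
  define cE where "cE = c1 * cnj c2 * om N (tdot L b2 a2) * om N (tdot L b1 (tneg N a2))"
  have cE: "cE \<noteq> 0" unfolding cE_def using e1(1) e2(1) by (auto simp: norm_mult)
  define E where "E = mult_op L N E1 (adj_op E2)"
  have Eform: "E = smult_op cE (W L N a b)"
    unfolding E_def e1(4) e2(4) cE_def a_def b_def by (rule E_form[OF N])
  have sub: "plane_subgroup N G" using code unfolding ti_topo_subsys_code_def by simp
  have GP: "G \<subseteq> pvecs N" using sub unfolding plane_subgroup_def by simp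
  show ?thesis
  proof (cases "\<forall>A\<in>Xl. mult_op L N E A = mult_op L N A E")
    case False
    then obtain A where A: "A \<in> Xl" "mult_op L N E A \<noteq> mult_op L N A E" by blast
    have AS: "A \<in> S" using A(1) unfolding Xl_def by simp
    then obtain cA aA bA where cA: "A = smult_op cA (W L N aA bA)"
      using stab(1) unfolding torus_paulis_def by blast
    define w where "w = om N (tdot L b aA - tdot L bA a)"
    have "mult_op L N E A = smult_op w (mult_op L N A E)"
      unfolding Eform cA smult_mult_left smult_mult_right W_comm[OF N, of L a b aA bA] w_def
      by (simp add: mult_ac)
    moreover have "w \<noteq> 1" using A(2) calculation by auto
    moreover have "A \<in> T" "adj_op A \<in> T" using XT A(1) gen_adj unfolding Tdef by blast+
    ultimately have z: "mult_op L N (mult_op L N P E) P = (\<lambda>_ _. 0)"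
      using caseA[OF P[folded T_def]] by blast
    define G0 where "G0 = W L N (wrap L N (fst pzero)) (wrap L N (snd pzero))"
    have G0: "G0 \<in> gauge_ops L N G"
      unfolding gauge_ops_def G0_def using sub unfolding plane_subgroup_def
      by (intro CollectI exI[of _ 1] exI[of _ pzero]) simp
    have "mult_op L N (mult_op L N P E) P = smult_op 0 (mult_op L N G0 P)"
      unfolding z smult_0 ..
    then show ?thesis using G0 unfolding E_def by blast
  next
    case True
    define e where "e = (g.ea, g.eb)"
    have eP: "e \<in> pvecs N" unfolding e_def by (rule g.e_pvecs)
    have loc: "pcomm N s e" if s: "s \<in> plane_center N G" "plane_linsize_lt (psupp s) (real lS)" for s
    proof -
      have sG: "s \<in> G" using s(1) center_sub by blast
      have fs: "finite (psupp s)" using sG GP pvecs_fin by blast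
      let ?Ws = "W L N (wrap L N (fst s)) (wrap L N (snd s))"
      have "?Ws \<in> op_center L N (gauge_ops L N G)" by (rule Ws_center[OF N L code s(1)])
      then obtain c where c: "cmod c = 1" "smult_op c ?Ws \<in> S" using stab(3) unfolding prop_sets_def by blast
      have "op_linsize_lt L N (smult_op c ?Ws) (real lS)" by (rule local_op[OF N L fs c(1) s(2)])
      then have "smult_op c ?Ws \<in> Xl" unfolding Xl_def using c(2) by simp
      then have "mult_op L N E (smult_op c ?Ws) = mult_op L N (smult_op c ?Ws) E" using True by blast
      then have "smult_op (c * cE) (mult_op L N (W L N a b) ?Ws) = smult_op (c * cE) (mult_op L N ?Ws (W L N a b))"
        unfolding Eform smult_mult_left smult_mult_right by (simp add: mult_ac)
      moreover have "c * cE \<noteq> 0" using c(1) cE by auto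
      ultimately have "mult_op L N (W L N a b) ?Ws = mult_op L N ?Ws (W L N a b)" by (rule smult_cancel[rotated])
      then have "int N dvd tdot L b (wrap L N (fst s)) - tdot L (wrap L N (snd s)) a"
        by (rule comm_dvd[OF N ab(1) wrap_tvecs[OF N]])
      then show ?thesis unfolding e_def by (rule g.pc[OF subsetD[OF GP sG] s(2), folded a_def b_def])
    qed
    have ctr: "plane_center N G = plane_span N {s\<in>plane_center N G. plane_linsize_lt (psupp s) (real lS)}"
      and cent: "{p\<in>pvecs N. \<forall>s\<in>plane_center N G. pcomm N p s} = G"
      using code unfolding ti_topo_subsys_code_def by auto
    have "{s\<in>plane_center N G. plane_linsize_lt (psupp s) (real lS)} \<subseteq> {v\<in>pvecs N. pcomm N v e}"
    proof
      fix s assume s: "s \<in> {s\<in>plane_center N G. plane_linsize_lt (psupp s) (real lS)}"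
      then have "s \<in> G" using center_sub by blast
      then have "s \<in> pvecs N" using GP by blast
      moreover have "pcomm N s e" using s loc by simp
      ultimately show "s \<in> {v\<in>pvecs N. pcomm N v e}" by simp
    qed
    then have "plane_span N {s\<in>plane_center N G. plane_linsize_lt (psupp s) (real lS)} \<subseteq> {v\<in>pvecs N. pcomm N v e}"
      by (rule span_sub[OF C_subgroup[OF N eP]])
    then have cs: "plane_center N G \<subseteq> {v\<in>pvecs N. pcomm N v e}" using ctr by simp
    have "pcomm N e s" if s: "s \<in> plane_center N G" for s
    proof -
      have sv: "s \<in> pvecs N" "pcomm N s e" using cs s by auto
      have "pcomm N s e \<longleftrightarrow> pcomm N e s" by (rule pcomm_sym[OF pvecs_fin[OF sv(1)] pvecs_fin[OF eP]])
      then show ?thesis using sv(2) by simp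
    qed
    then have "e \<in> {p\<in>pvecs N. \<forall>s\<in>plane_center N G. pcomm N p s}" using eP by simp
    then have eG: "e \<in> G" using cent by simp
    define Gop where "Gop = W L N a b"
    have GopG: "Gop \<in> gauge_ops L N G"
    proof -
      have "W L N (wrap L N (fst e)) (wrap L N (snd e)) = Gop"
        unfolding Gop_def e_def a_def b_def using g.E3' by simp
      then show ?thesis unfolding gauge_ops_def using eG
        by (intro CollectI exI[of _ 1] exI[of _ e]) simp
    qed
    have comm: "mult_op L N B Gop = mult_op L N Gop B" if B: "B \<in> S" for B
    proof -
      obtain c where c: "cmod c = 1" "smult_op c B \<in> op_center L N (gauge_ops L N G)"
        using stab(3) B unfolding prop_sets_def by blast
      then have "mult_op L N (smult_op c B) Gop = mult_op L N Gop (smult_op c B)"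
        using GopG unfolding op_center_def by blast
      then have "smult_op c (mult_op L N B Gop) = smult_op c (mult_op L N Gop B)"
        unfolding smult_mult_left smult_mult_right .
      moreover have "c \<noteq> 0" using c(1) by auto
      ultimately show ?thesis by (rule smult_cancel[rotated])
    qed
    have "mult_op L N (mult_op L N P (smult_op cE Gop)) P = smult_op cE (mult_op L N Gop P)"
      by (rule caseB[OF P[folded T_def] TS stab(1) comm])
    then show ?thesis using GopG unfolding E_def[symmetric] Eform Gop_def[symmetric] by blast
  qed
qed


end
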